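(* Let $R\subseteq\mathbb N$ be a congruence-periodic sparse predicate, $d\in\mathbb N^+$, $\tilde R\subseteq^dR$, $n\in\mathbb N^+$, and $\mathbf A,\mathbf B$ $n$-tuples of operators on $R$. Then there is $\Delta_0$ such that for every $\Delta\in d\mathbb N$ with $\Delta\ge\Delta_0$ the following holds. For all $x,y_1,y_2\in\mathbb Z$, $u_1,\dots,u_n\in\tilde R\cup\{-\infty\}$ and $v_1,\dots,v_n\in\tilde R\cup\{+\infty\}$, if there is $z\in\tilde R^n_\Delta$ with $$y_1+\mathbf A\cdot z<x<y_2+\mathbf B\cdot z\ \wedge\ \bigwedge_{i=1}^nu_i\le z_i\le v_i\qquad(\dagger)$$ then either $v_1=+\infty$ and ($A_1=_R0$ and $B_1>_R0$, or $A_1<_R0$ and $B_1=_R0$), or there is $z\in\tilde R^n_\Delta$ satisfying $(\dagger)$ and one of: (i) $z_i=\sigma^\Delta z_{i+1}$ for some $1\le i\le n$ (with $z_{n+1}:=\min\tilde R$); (ii) $z_i\in\{u_i,v_i\}$ for some $1\le i\le n$; (iii) all $A_i,B_i$ are $\neq_R0$, and $z=P_\Delta(x-y_1;\mathbf A,\tilde R)$ or $z=P_\Delta(y_2-x;-\mathbf B,\tilde R)$.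
   Context: Let $R\subseteq\mathbb N$ be infinite, enumerated increasingly as $(r_n)_{n\in\mathbb N}$; $\sigma:R\to R$ is the successor map, $\sigma^k$ its iterate ($\sigma^0=\mathrm{id}$). An operator on $R$ is a function $R\to\mathbb Z$, $z\mapsto\sum_{i=0}^ma_i\sigma^i(z)$, $a_i\in\mathbb Z$. $A=_R0$ means $Az=0$ for all $z\in R$; $A>_R0$ (resp. $<_R0$) means $Az>0$ (resp. $<0$) for all but finitely many $z$. $R$ is sparse if every operator $A$ satisfies (S1) $A=_R0$ or $A>_R0$ or $A<_R0$, and (S2) if $A>_R0$ there is $\Delta$ with $A(\sigma^\Delta z)>z$ for all $z\in R$. Congruence-periodic: for each $m\in\mathbb N^+$, $(r_n\bmod m)$ is eventually periodic. $\tilde R\subseteq^dR$ means $\tilde R=\{r_{N+dt}:t\in\mathbb N\}$ for some $N\in\mathbb N$. $\mathbf A\cdot z=\sum A_iz_i$; $\mathbf A\cdot S=\{\mathbf A\cdot z:z\in S\}$; $-\mathbf B=(-B_1,\dots,-B_n)$. $\tilde R^n_\Delta=\{z\in\tilde R^n:z_i\ge\sigma^\Delta z_{i+1}\ (1\le i\le n)\}$ with $z_{n+1}:=\min\tilde R$. For $\mathbf A$ with all entries $\neq_R0$ and $\Delta$ large enough that $z\mapsto\mathbf A\cdot z$ is injective on $R^n_\Delta$: $\min_{\mathbf A}S$/$\max_{\mathbf A}S$ is the unique $z\in S$ minimising/maximising $\mathbf A\cdot z$ (when bounded), and $P_\Delta(x;\mathbf A,\tilde R)=\max_{\mathbf A}\{z\in\tilde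 R^n_\Delta:\mathbf A\cdot z<x\}$ if $x>\inf\mathbf A\cdot\tilde R^n_\Delta$, and $\min_{\mathbf A}\tilde R^n_\Delta$ otherwise. *)

theory Defs
  imports Main
begin

definition succR :: "nat set \<Rightarrow> nat \<Rightarrow> nat" where
  "succR R z = (LEAST r. r \<in> R \<and> z < r)"

definition enumR :: "nat set \<Rightarrow> nat \<Rightarrow> nat" where
  "enumR R n = (succR R ^^ n) (LEAST r. r \<in> R)"

(* An operator sum_{i=0}^m a_i sigma^i is represented by its coefficient list [a_0,...,a_m]. *)
type_synonym operator = "int list"

definition op_app :: "nat set \<Rightarrow> operator \<Rightarrow> nat \<Rightarrow> int" where
  "op_app R a z = (\<Sum>i<length a. a ! i * int ((succR R ^^ i) z))"

definition op_eq0 :: "nat set \<Rightarrow> operator \<Rightarrow> bool" where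
  "op_eq0 R a \<longleftrightarrow> (\<forall>z\<in>R. op_app R a z = 0)"

definition op_pos :: "nat set \<Rightarrow> operator \<Rightarrow> bool" where
  "op_pos R a \<longleftrightarrow> finite {z\<in>R. \<not> op_app R a z > 0}"

definition op_neg :: "nat set \<Rightarrow> operator \<Rightarrow> bool" where
  "op_neg R a \<longleftrightarrow> finite {z\<in>R. \<not> op_app R a z < 0}"

definition sparse :: "nat set \<Rightarrow> bool" where
  "sparse R \<longleftrightarrow> infinite R \<and>
     (\<forall>a. (op_eq0 R a \<or> op_pos R a \<or> op_neg R a) \<and>
          (op_pos R a \<longrightarrow> (\<exists>D. \<forall>z\<in>R. op_app R a ((succR R ^^ D) z) > int z)))"

definition congruence_periodic :: "nat set \<Rightarrow> bool" where
  "congruence_periodic R \<longleftrightarrow>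
     (\<forall>m>0. \<exists>N p. p > 0 \<and> (\<forall>k\<ge>N. enumR R (k + p) mod m = enumR R k mod m))"

definition sub_d :: "nat set \<Rightarrow> nat \<Rightarrow> nat set \<Rightarrow> bool" where
  "sub_d Rt d R \<longleftrightarrow> (\<exists>N. Rt = {enumR R (N + d * t) | t. True})"

(* n-tuples are lists of length n, 0-indexed: list index i corresponds to paper index i+1. *)
definition dotR :: "nat set \<Rightarrow> operator list \<Rightarrow> nat list \<Rightarrow> int" where
  "dotR R A z = (\<Sum>i<length z. op_app R (A ! i) (z ! i))"

definition neg_ops :: "operator list \<Rightarrow> operator list" where
  "neg_ops B = map (map uminus) B"

(* z_{i+1} with the convention z_{n+1} := min Rt (0-indexed: next entry, or min Rt at the end) *)
definition znext :: "nat set \<Rightarrow> nat list \<Rightarrow> nat \<Rightarrow> nat" where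
  "znext Rt z i = (if Suc i < length z then z ! Suc i else (LEAST r. r \<in> Rt))"

definition tuples :: "nat set \<Rightarrow> nat set \<Rightarrow> nat \<Rightarrow> nat \<Rightarrow> nat list set" where
  "tuples R Rt n D = {z. length z = n \<and> set z \<subseteq> Rt \<and>
       (\<forall>i<n. z ! i \<ge> (succR R ^^ D) (znext Rt z i))}"

definition maxA :: "nat set \<Rightarrow> operator list \<Rightarrow> nat list set \<Rightarrow> nat list" where
  "maxA R A S = (THE z. z \<in> S \<and> (\<forall>w\<in>S. dotR R A w \<le> dotR R A z))"

definition minA :: "nat set \<Rightarrow> operator list \<Rightarrow> nat list set \<Rightarrow> nat list" where
  "minA R A S = (THE z. z \<in> S \<and> (\<forall>w\<in>S. dotR R A z \<le> dotR R A w))"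

(* P_Delta(x; A, Rt); "x > inf A.Rt^n_Delta" is written as "some element of A.Rt^n_Delta is < x" *)
definition P_Delta :: "nat set \<Rightarrow> nat set \<Rightarrow> nat \<Rightarrow> nat \<Rightarrow> int \<Rightarrow> operator list \<Rightarrow> nat list" where
  "P_Delta R Rt n D x A =
     (if \<exists>z\<in>tuples R Rt n D. dotR R A z < x
      then maxA R A {z\<in>tuples R Rt n D. dotR R A z < x}
      else minA R A (tuples R Rt n D))"

(* u_i \<in> Rt \<union> {-\<infinity>} encoded as nat option with None = -\<infinity>;
   v_i \<in> Rt \<union> {+\<infinity>} encoded as nat option with None = +\<infinity>. *)
definition lower_ok :: "nat option \<Rightarrow> nat \<Rightarrow> bool" where
  "lower_ok u a = (case u of None \<Rightarrow> True | Some b \<Rightarrow> b \<le> a)"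

definition upper_ok :: "nat option \<Rightarrow> nat \<Rightarrow> bool" where
  "upper_ok v a = (case v of None \<Rightarrow> True | Some b \<Rightarrow> a \<le> b)"

definition dagger :: "nat set \<Rightarrow> operator list \<Rightarrow> operator list \<Rightarrow> int \<Rightarrow> int \<Rightarrow> int
    \<Rightarrow> nat option list \<Rightarrow> nat option list \<Rightarrow> nat list \<Rightarrow> bool" where
  "dagger R A B x y1 y2 u v z \<longleftrightarrow>
     y1 + dotR R A z < x \<and> x < y2 + dotR R B z \<and>
     (\<forall>i<length z. lower_ok (u ! i) (z ! i) \<and> upper_ok (v ! i) (z ! i))"

end

theory Submission
  imports Defs "HOL-Library.Infinite_Set"
begin


definition kn :: "nat list \<Rightarrow> nat \<Rightarrow> nat" where
  "kn ks i = (if Suc i < length ks then ks ! Suc i else 0)"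

definition IT :: "nat \<Rightarrow> nat \<Rightarrow> nat list set" where
  "IT n dl = {ks. length ks = n \<and> (\<forall>i<n. kn ks i + dl \<le> ks ! i)}"

definition boxok :: "nat option list \<Rightarrow> nat option list \<Rightarrow> nat list \<Rightarrow> bool" where
  "boxok lo hi ks = (\<forall>i<length ks. lower_ok (lo ! i) (ks ! i) \<and> upper_ok (hi ! i) (ks ! i))"

definition FF :: "(nat \<Rightarrow> nat \<Rightarrow> int) \<Rightarrow> nat list \<Rightarrow> int" where
  "FF a ks = (\<Sum>i<length ks. a i (ks ! i))"

definition Inc :: "nat \<Rightarrow> (nat \<Rightarrow> int) \<Rightarrow> bool" where
  "Inc dl f = (\<forall>k\<ge>dl. f k < f (Suc k))"

definition Dec :: "nat \<Rightarrow> (nat \<Rightarrow> int) \<Rightarrow> bool" where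
  "Dec dl f = (\<forall>k\<ge>dl. f (Suc k) < f k)"

definition typeok :: "nat \<Rightarrow> int \<Rightarrow> (nat \<Rightarrow> int) \<Rightarrow> bool" where
  "typeok dl t f = ((t = 0 \<and> (\<forall>k. f k = 0)) \<or> (t = 1 \<and> Inc dl f) \<or> (t = -1 \<and> Dec dl f))"

definition Hdom :: "nat \<Rightarrow> nat \<Rightarrow> (nat \<Rightarrow> nat \<Rightarrow> int) \<Rightarrow> bool" where
  "Hdom n dl a = (\<forall>w\<in>IT n dl. \<forall>w'\<in>IT n dl. \<forall>i<n. take i w = take i w' \<longrightarrow>
      a i (w ! i) < a i (w' ! i) \<longrightarrow> FF a w < FF a w')"

definition SS where
  "SS n dl lo hi a b c1 c2 = {ks \<in> IT n dl. boxok lo hi ks \<and> FF a ks < c1 \<and> c2 < FF b ks}"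

definition Pmax where
  "Pmax n dl a c ks = (\<forall>w\<in>IT n dl. w \<noteq> ks \<longrightarrow> FF a w < FF a ks \<or> c \<le> FF a w)"

definition goodpt where
  "goodpt n dl lo hi ks = ((\<exists>i<n. ks ! i = kn ks i + dl) \<or> (\<exists>i<n. lo ! i = Some (ks ! i) \<or> hi ! i = Some (ks ! i)))"

lemma Inc_less: "Inc dl f \<Longrightarrow> dl \<le> x \<Longrightarrow> x < y \<Longrightarrow> f x < f y"
proof (induction y)
  case 0 then show ?case by simp
next
  case (Suc y)
  show ?case
  proof (cases "x = y")
    case True then show ?thesis using Suc.prems by (auto simp: Inc_def)
  next
    case False
    then have "f x < f y" using Suc by simp
    moreover have "f y < f (Suc y)" using Suc.prems False by (auto simp: Inc_def)
    ultimately show ?thesis by simp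
  qed
qed

lemma Dec_less: "Dec dl f \<Longrightarrow> dl \<le> x \<Longrightarrow> x < y \<Longrightarrow> f y < f x"
proof (induction y)
  case 0 then show ?case by simp
next
  case (Suc y)
  show ?case
  proof (cases "x = y")
    case True then show ?thesis using Suc.prems by (auto simp: Dec_def)
  next
    case False
    then have "f y < f x" using Suc by simp
    moreover have "f (Suc y) < f y" using Suc.prems False by (auto simp: Dec_def)
    ultimately show ?thesis by simp
  qed
qed

lemma FF_update:
  assumes "j < length ks"
  shows "FF a (ks[j := k]) = FF a ks - a j (ks ! j) + a j k"
proof -
  have "FF a (ks[j := k]) - FF a ks = (\<Sum>i<length ks. a i (ks[j := k] ! i) - a i (ks ! i))"
    by (simp add: FF_def sum_subtractf)
  also have "\<dots> = (\<Sum>i<length ks. if i = j then a j k - a j (ks ! j) else 0)"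
    by (rule sum.cong) (auto simp: nth_list_update)
  also have "\<dots> = a j k - a j (ks ! j)" using assms by simp
  finally show ?thesis by simp
qed

lemma IT_ge: "ks \<in> IT n dl \<Longrightarrow> i < n \<Longrightarrow> dl \<le> ks ! i"
  by (auto simp: IT_def)

lemma IT_down:
  assumes "ks \<in> IT n dl" "j < n" "ks ! j \<noteq> kn ks j + dl"
  shows "ks[j := ks ! j - 1] \<in> IT n dl"
proof -
  have L: "length ks = n" using assms by (simp add: IT_def)
  have "\<forall>i<n. kn (ks[j := ks ! j - 1]) i + dl \<le> ks[j := ks ! j - 1] ! i"
  proof (intro allI impI)
    fix i assume i: "i < n"
    have c: "i < n \<Longrightarrow> kn ks i + dl \<le> ks ! i" for i using assms(1) by (auto simp: IT_def)
    have cj: "kn ks j + dl \<le> ks ! j" using assms(1,2) by (auto simp: IT_def)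
    show "kn (ks[j := ks ! j - 1]) i + dl \<le> ks[j := ks ! j - 1] ! i"
    proof (cases "i = j")
      case True
      then show ?thesis using cj assms(3) L i by (auto simp: kn_def nth_list_update)
    next
      case False
      have "kn (ks[j := ks ! j - 1]) i \<le> kn ks i" using L i
        by (cases "Suc i = j") (auto simp: kn_def nth_list_update)
      then show ?thesis using False c[of i] i L by (auto simp: nth_list_update)
    qed
  qed
  then show ?thesis using L by (simp add: IT_def)
qed

lemma IT_up:
  assumes "ks \<in> IT n dl" "j < n" "j > 0 \<Longrightarrow> ks ! (j - 1) \<noteq> ks ! j + dl"
  shows "ks[j := Suc (ks ! j)] \<in> IT n dl"
proof -
  have L: "length ks = n" using assms by (simp add: IT_def)
  have "\<forall>i<n. kn (ks[j := Suc (ks ! j)]) i + dl \<le> ks[j := Suc (ks ! j)] ! i"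
  proof (intro allI impI)
    fix i assume i: "i < n"
    have c: "i < n \<Longrightarrow> kn ks i + dl \<le> ks ! i" for i using assms(1) by (auto simp: IT_def)
    show "kn (ks[j := Suc (ks ! j)]) i + dl \<le> ks[j := Suc (ks ! j)] ! i"
    proof (cases "Suc i = j")
      case True
      then have "kn ks i = ks ! j" using L assms(2) by (simp add: kn_def)
      then show ?thesis using True c[of i] assms(3) L i
        by (auto simp: kn_def nth_list_update)
    next
      case False
      have "kn (ks[j := Suc (ks ! j)]) i = kn ks i" using L i False
        by (auto simp: kn_def nth_list_update)
      then show ?thesis using c[of i] i L by (cases "i = j") (auto simp: nth_list_update)
    qed
  qed
  then show ?thesis using L by (simp add: IT_def)
qed

lemma box_down:
  assumes "boxok lo hi ks" "j < length ks" "lo ! j \<noteq> Some (ks ! j)"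
  shows "boxok lo hi (ks[j := ks ! j - 1])"
  unfolding boxok_def
proof (intro allI impI)
  fix i assume i: "i < length (ks[j := ks ! j - 1])"
  have a: "lower_ok (lo ! i) (ks ! i) \<and> upper_ok (hi ! i) (ks ! i)" using assms(1) i by (simp add: boxok_def)
  show "lower_ok (lo ! i) (ks[j := ks ! j - 1] ! i) \<and> upper_ok (hi ! i) (ks[j := ks ! j - 1] ! i)"
  proof (cases "i = j")
    case True
    then show ?thesis using a assms(3) i
      by (auto simp: lower_ok_def upper_ok_def split: option.splits)
  next
    case False then show ?thesis using a by simp
  qed
qed

lemma box_up:
  assumes "boxok lo hi ks" "j < length ks" "hi ! j \<noteq> Some (ks ! j)"
  shows "boxok lo hi (ks[j := Suc (ks ! j)])"
  unfolding boxok_def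
proof (intro allI impI)
  fix i assume i: "i < length (ks[j := Suc (ks ! j)])"
  have a: "lower_ok (lo ! i) (ks ! i) \<and> upper_ok (hi ! i) (ks ! i)" using assms(1) i by (simp add: boxok_def)
  show "lower_ok (lo ! i) (ks[j := Suc (ks ! j)] ! i) \<and> upper_ok (hi ! i) (ks[j := Suc (ks ! j)] ! i)"
  proof (cases "i = j")
    case True
    then show ?thesis using a assms(3) i
      by (auto simp: lower_ok_def upper_ok_def split: option.splits)
  next
    case False then show ?thesis using a by simp
  qed
qed

lemma SS_IT: "ks \<in> SS n dl lo hi a b c1 c2 \<Longrightarrow> ks \<in> IT n dl"
  by (simp add: SS_def)

lemma IT_len: "ks \<in> IT n dl \<Longrightarrow> length ks = n"
  by (simp add: IT_def)

lemma walk_down: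
  assumes "j < n"
   and safe: "\<And>ks. ks \<in> SS n dl lo hi a b c1 c2 \<Longrightarrow> ks[j := ks ! j - 1] \<in> IT n dl \<Longrightarrow>
        boxok lo hi (ks[j := ks ! j - 1]) \<Longrightarrow> ks[j := ks ! j - 1] \<in> SS n dl lo hi a b c1 c2"
  shows "\<forall>ks. ks ! j = m \<longrightarrow> ks \<in> SS n dl lo hi a b c1 c2 \<longrightarrow>
          (\<exists>ks'\<in>SS n dl lo hi a b c1 c2. goodpt n dl lo hi ks')"
proof (induction m rule: less_induct)
  case (less m)
  show ?case
  proof (intro allI impI)
    fix ks assume m: "ks ! j = m" and S: "ks \<in> SS n dl lo hi a b c1 c2"
    show "\<exists>ks'\<in>SS n dl lo hi a b c1 c2. goodpt n dl lo hi ks'"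
    proof (cases "goodpt n dl lo hi ks")
      case True then show ?thesis using S by blast
    next
      case False
      then have g1: "ks ! j \<noteq> kn ks j + dl" and g2: "lo ! j \<noteq> Some (ks ! j)"
        using assms(1) by (auto simp: goodpt_def)
      have I: "ks \<in> IT n dl" using S by (simp add: SS_def)
      have L: "length ks = n" using I by (simp add: IT_def)
      have I': "ks[j := ks ! j - 1] \<in> IT n dl" using IT_down[OF I assms(1) g1] .
      have B': "boxok lo hi (ks[j := ks ! j - 1])"
        using box_down[OF _ _ g2] S L assms(1) by (auto simp: SS_def)
      have S': "ks[j := ks ! j - 1] \<in> SS n dl lo hi a b c1 c2" using safe[OF S I' B'] .
      have "kn ks j + dl \<le> ks ! j" using I assms(1) by (auto simp: IT_def)
      then have lt: "ks[j := ks ! j - 1] ! j < m" using g1 m L assms(1) by auto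
      show ?thesis using less.IH[OF lt] S' by blast
    qed
  qed
qed

lemma walk_up:
  assumes "j < n" and bnd: "0 < j \<or> hi ! 0 \<noteq> None"
   and safe: "\<And>ks. ks \<in> SS n dl lo hi a b c1 c2 \<Longrightarrow> ks[j := Suc (ks ! j)] \<in> IT n dl \<Longrightarrow>
        boxok lo hi (ks[j := Suc (ks ! j)]) \<Longrightarrow> ks[j := Suc (ks ! j)] \<in> SS n dl lo hi a b c1 c2"
  shows "\<forall>ks. (if 0 < j then ks ! (j - 1) else the (hi ! 0)) - ks ! j = m \<longrightarrow>
          ks \<in> SS n dl lo hi a b c1 c2 \<longrightarrow>
          (\<exists>ks'\<in>SS n dl lo hi a b c1 c2. goodpt n dl lo hi ks')"
proof (induction m rule: less_induct)
  case (less m)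
  show ?case
  proof (intro allI impI)
    fix ks assume m: "(if 0 < j then ks ! (j - 1) else the (hi ! 0)) - ks ! j = m"
      and S: "ks \<in> SS n dl lo hi a b c1 c2"
    show "\<exists>ks'\<in>SS n dl lo hi a b c1 c2. goodpt n dl lo hi ks'"
    proof (cases "goodpt n dl lo hi ks")
      case True then show ?thesis using S by blast
    next
      case False
      have I: "ks \<in> IT n dl" using S by (simp add: SS_def)
      have L: "length ks = n" using I by (simp add: IT_def)
      have knj: "0 < j \<Longrightarrow> kn ks (j - 1) = ks ! j" using L assms(1) by (simp add: kn_def)
      have g1: "0 < j \<Longrightarrow> ks ! (j - 1) \<noteq> ks ! j + dl"
        using False assms(1) knj by (auto simp: goodpt_def) (metis less_imp_diff_less)
      have g2: "hi ! j \<noteq> Some (ks ! j)"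
        using assms(1) False by (auto simp: goodpt_def)
      have I': "ks[j := Suc (ks ! j)] \<in> IT n dl" using IT_up[OF I assms(1) g1] .
      have B': "boxok lo hi (ks[j := Suc (ks ! j)])"
        using box_up[OF _ _ g2] S L assms(1) by (auto simp: SS_def)
      have S': "ks[j := Suc (ks ! j)] \<in> SS n dl lo hi a b c1 c2" using safe[OF S I' B'] .
      have lt: "Suc (ks ! j) \<le> (if 0 < j then ks ! (j - 1) else the (hi ! 0))"
      proof (cases "0 < j")
        case True
        have "kn ks (j - 1) + dl \<le> ks ! (j - 1)" using I assms(1) by (auto simp: IT_def)
        then show ?thesis using True knj g1 by auto
      next
        case False
        then have j0: "j = 0" by simp
        then obtain h where h: "hi ! 0 = Some h" using bnd by auto
        have "upper_ok (hi ! 0) (ks ! 0)" using S assms(1) L j0 by (auto simp: SS_def boxok_def)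
        then show ?thesis using h g2 j0 by (auto simp: upper_ok_def)
      qed
      have eq: "(if 0 < j then ks[j := Suc (ks ! j)] ! (j - 1) else the (hi ! 0))
                 = (if 0 < j then ks ! (j - 1) else the (hi ! 0))" by auto
      have "(if 0 < j then ks[j := Suc (ks ! j)] ! (j - 1) else the (hi ! 0))
              - ks[j := Suc (ks ! j)] ! j < m"
        using lt m L assms(1) unfolding eq by auto
      then show ?thesis using less.IH S' by blast
    qed
  qed
qed

lemma first_diff:
  assumes "length w = length v" "w \<noteq> v"
  shows "\<exists>i<length w. take i w = take i v \<and> w ! i \<noteq> v ! i"
proof -
  have ex: "\<exists>i. i < length w \<and> w ! i \<noteq> v ! i" using assms by (metis nth_equalityI)
  define i where "i = (LEAST i. i < length w \<and> w ! i \<noteq> v ! i)"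
  have i: "i < length w \<and> w ! i \<noteq> v ! i" unfolding i_def by (rule LeastI_ex[OF ex])
  have "\<forall>k<i. w ! k = v ! k"
  proof (intro allI impI)
    fix k assume "k < i"
    then have "\<not> (k < length w \<and> w ! k \<noteq> v ! k)" unfolding i_def by (rule not_less_Least)
    then show "w ! k = v ! k" using \<open>k < i\<close> i by auto
  qed
  then have "take i w = take i v" using i assms(1) by (intro nth_equalityI) auto
  then show ?thesis using i by blast
qed

lemma mono_inj: "Inc dl f \<or> Dec dl f \<Longrightarrow> dl \<le> x \<Longrightarrow> dl \<le> y \<Longrightarrow> x \<noteq> y \<Longrightarrow> f x \<noteq> f y"
  by (metis Inc_less Dec_less linorder_neqE_nat less_irrefl)

lemma Plemma:
  assumes Hd: "Hdom n dl a" and mono: "\<forall>i<n. Inc dl (a i) \<or> Dec dl (a i)"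
   and ks: "ks \<in> IT n dl" and n: "n > 0" and j: "j = n - 1"
   and ks': "ks[j := k'] \<in> IT n dl" and lt: "a j (ks ! j) < a j k'"
   and step: "k' = Suc (ks ! j) \<or> Suc k' = ks ! j"
   and c: "c \<le> FF a (ks[j := k'])"
  shows "Pmax n dl a c ks"
  unfolding Pmax_def
proof (intro ballI impI)
  fix w assume w: "w \<in> IT n dl" and ne: "w \<noteq> ks"
  have Lw: "length w = n" and Lk: "length ks = n" using w ks by (auto simp: IT_def)
  obtain i where i: "i < n" "take i w = take i ks" "w ! i \<noteq> ks ! i"
    using first_diff[of w ks] Lw Lk ne by auto
  have jn: "j < n" using n j by simp
  have ij: "i \<le> j" using i j by simp
  have tk': "take i (ks[j := k']) = take i ks" using ij by simp
  have dw: "dl \<le> w ! i" and dk: "dl \<le> ks ! i" using IT_ge[OF w i(1)] IT_ge[OF ks i(1)] by auto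
  have dk': "dl \<le> k'" using IT_ge[OF ks' jn] jn Lk by simp
  have neq: "a i (w ! i) \<noteq> a i (ks ! i)" using mono_inj[OF _ dw dk i(3)] mono i(1) by auto
  show "FF a w < FF a ks \<or> c \<le> FF a w"
  proof (cases "a i (w ! i) < a i (ks ! i)")
    case True
    then have "FF a w < FF a ks" using Hd w ks i unfolding Hdom_def by blast
    then show ?thesis by simp
  next
    case False
    then have gt: "a i (ks ! i) < a i (w ! i)" using neq by simp
    show ?thesis
    proof (cases "i < j")
      case True
      have "ks[j := k'] ! i = ks ! i" using True by simp
      then have "FF a (ks[j := k']) < FF a w"
        using Hd ks' w i gt tk' unfolding Hdom_def by (metis)
      then show ?thesis using c by simp
    next
      case False
      then have ii: "i = j" using ij by simp
      have le: "a j k' \<le> a j (w ! j)"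
      proof -
        have mj: "Inc dl (a j) \<or> Dec dl (a j)" using mono jn by simp
        have dwj: "dl \<le> w ! j" and dkj: "dl \<le> ks ! j" using dw dk ii by auto
        show ?thesis using mj
        proof
          assume inc: "Inc dl (a j)"
          have "ks ! j < k'" using lt inc dkj dk' by (metis Dec_less Inc_less linorder_neqE_nat less_asym)
          moreover have "ks ! j < w ! j" using gt ii inc dkj dwj
            by (metis Inc_less linorder_neqE_nat less_asym)
          ultimately have "k' \<le> w ! j" using step by auto
          then show ?thesis using inc dk' by (metis Inc_less order_le_less order_less_imp_le)
        next
          assume dec: "Dec dl (a j)"
          have "k' < ks ! j" using lt dec dkj dk' by (metis Dec_less linorder_neqE_nat less_asym)
          moreover have "w ! j < ks ! j" using gt ii dec dkj dwj
            by (metis Dec_less linorder_neqE_nat less_asym)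
          ultimately have "w ! j \<le> k'" using step by auto
          then show ?thesis using dec dwj by (metis Dec_less order_le_less order_less_imp_le)
        qed
      qed
      show ?thesis
      proof (cases "a j k' = a j (w ! j)")
        case True
        have "k' = w ! j"
          using True mono_inj[of dl "a j" k' "w ! j"] mono jn dk' dw ii by auto
        have "w = ks[j := k']"
        proof (rule nth_equalityI)
          show "length w = length (ks[j := k'])" using Lw Lk by simp
          fix l assume l: "l < length w"
          show "w ! l = ks[j := k'] ! l"
          proof (cases "l = j")
            case True then show ?thesis using \<open>k' = w ! j\<close> Lk jn by simp
          next
            case False
            then have "l < i" using l Lw j ii by simp
            then have "w ! l = ks ! l" using i(2) by (metis nth_take)
            then show ?thesis using False by simp
          qed
        qed
        then show ?thesis using c by simp
      next
        case False
        then have "a j (ks[j := k'] ! j) < a j (w ! j)" using le Lk jn by simp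
        then have "FF a (ks[j := k']) < FF a w"
          using Hd ks' w jn i(2) ii tk' unfolding Hdom_def by (metis)
        then show ?thesis using c by simp
      qed
    qed
  qed
qed

lemma FF_neg: "FF (\<lambda>i k. - b i k) w = - FF b w"
  by (simp add: FF_def sum_negf)

lemma Inc_neg: "Inc dl f \<Longrightarrow> Dec dl (\<lambda>k. - f k)" by (simp add: Inc_def Dec_def)
lemma Dec_neg: "Dec dl f \<Longrightarrow> Inc dl (\<lambda>k. - f k)" by (simp add: Inc_def Dec_def)

lemma last_step:
  assumes Hda: "Hdom n dl a" and Hdb: "Hdom n dl (\<lambda>i k. - b i k)"
   and mono: "\<forall>i<n. (Inc dl (a i) \<or> Dec dl (a i)) \<and> (Inc dl (b i) \<or> Dec dl (b i))"
   and n: "n > 0" and j: "j = n - 1"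
   and S: "ks \<in> SS n dl lo hi a b c1 c2"
   and I': "ks[j := k'] \<in> IT n dl" and B': "boxok lo hi (ks[j := k'])"
   and step: "k' = Suc (ks ! j) \<or> Suc k' = ks ! j"
   and lt: "a j (ks ! j) < a j k'"
  shows "(ks[j := k'] \<in> SS n dl lo hi a b c1 c2 \<and> FF a ks < FF a (ks[j := k']))
     \<or> Pmax n dl a c1 ks \<or> Pmax n dl (\<lambda>i k. - b i k) (- c2) ks"
proof -
  have I: "ks \<in> IT n dl" using S by (simp add: SS_def)
  have L: "length ks = n" using I by (simp add: IT_def)
  have jn: "j < n" using n j by simp
  have up: "FF a (ks[j := k']) = FF a ks - a j (ks ! j) + a j k'" using FF_update L jn by simp
  have upb: "FF b (ks[j := k']) = FF b ks - b j (ks ! j) + b j k'" using FF_update L jn by simp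
  have monoa: "\<forall>i<n. Inc dl (a i) \<or> Dec dl (a i)" using mono by simp
  have monob: "\<forall>i<n. Inc dl (\<lambda>k. - b i k) \<or> Dec dl (\<lambda>k. - b i k)"
    using mono Inc_neg Dec_neg by blast
  show ?thesis
  proof (cases "c1 \<le> FF a (ks[j := k'])")
    case True
    then have "Pmax n dl a c1 ks" using Plemma[OF Hda monoa I n j I' lt step] by simp
    then show ?thesis by simp
  next
    case c1: False
    show ?thesis
    proof (cases "FF b (ks[j := k']) \<le> c2")
      case True
      have "c2 < FF b ks" using S by (simp add: SS_def)
      then have "b j k' < b j (ks ! j)" using True upb by simp
      then have lt2: "- b j (ks ! j) < - b j k'" by simp
      have "- c2 \<le> FF (\<lambda>i k. - b i k) (ks[j := k'])" using True FF_neg[of b] by simp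
      then have "Pmax n dl (\<lambda>i k. - b i k) (- c2) ks"
        using Plemma[OF Hdb monob I n j I' _ step, of "- c2"] lt2 by simp
      then show ?thesis by simp
    next
      case False
      then have "ks[j := k'] \<in> SS n dl lo hi a b c1 c2" using c1 I' B' by (simp add: SS_def)
      moreover have "FF a ks < FF a (ks[j := k'])" using up lt by simp
      ultimately show ?thesis by simp
    qed
  qed
qed

definition concl where
  "concl n dl lo hi a b c1 c2 ks = (goodpt n dl lo hi ks \<or> Pmax n dl a c1 ks \<or> Pmax n dl (\<lambda>i k. - b i k) (- c2) ks)"

lemma walk_last:
  assumes Hda: "Hdom n dl a" and Hdb: "Hdom n dl (\<lambda>i k. - b i k)"
   and mono: "\<forall>i<n. (Inc dl (a i) \<or> Dec dl (a i)) \<and> (Inc dl (b i) \<or> Dec dl (b i))"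
   and n: "n > 0" and j: "j = n - 1"
  shows "\<forall>ks. nat (c1 - FF a ks) = m \<longrightarrow> ks \<in> SS n dl lo hi a b c1 c2 \<longrightarrow>
          (\<exists>ks'\<in>SS n dl lo hi a b c1 c2. concl n dl lo hi a b c1 c2 ks')"
proof (induction m rule: less_induct)
  case (less m)
  show ?case
  proof (intro allI impI)
    fix ks assume m: "nat (c1 - FF a ks) = m" and S: "ks \<in> SS n dl lo hi a b c1 c2"
    have jn: "j < n" using n j by simp
    have I: "ks \<in> IT n dl" using S by (simp add: SS_def)
    have L: "length ks = n" using I by (simp add: IT_def)
    have Bx: "boxok lo hi ks" using S by (simp add: SS_def)
    have fa: "FF a ks < c1" using S by (simp add: SS_def)
    have dj: "dl \<le> ks ! j" using IT_ge[OF I jn] .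
    show "\<exists>ks'\<in>SS n dl lo hi a b c1 c2. concl n dl lo hi a b c1 c2 ks'"
    proof (cases "goodpt n dl lo hi ks")
      case True then show ?thesis using S by (auto simp: concl_def)
    next
      case False
      have cont: "ks[j := k'] \<in> SS n dl lo hi a b c1 c2 \<and> FF a ks < FF a (ks[j := k'])
           \<Longrightarrow> ?thesis" for k'
      proof -
        assume h: "ks[j := k'] \<in> SS n dl lo hi a b c1 c2 \<and> FF a ks < FF a (ks[j := k'])"
        then have "FF a (ks[j := k']) < c1" by (simp add: SS_def)
        then have "nat (c1 - FF a (ks[j := k'])) < m" using h m by linarith
        then show ?thesis using less.IH h by blast
      qed
      have mj: "Inc dl (a j) \<or> Dec dl (a j)" using mono jn by simp
      then show ?thesis
      proof
        assume inc: "Inc dl (a j)"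
        have knj: "0 < j \<Longrightarrow> kn ks (j - 1) = ks ! j" using L jn by (simp add: kn_def)
        have g1: "0 < j \<Longrightarrow> ks ! (j - 1) \<noteq> ks ! j + dl"
          using False jn knj by (auto simp: goodpt_def) (metis less_imp_diff_less)
        have g2: "hi ! j \<noteq> Some (ks ! j)" using jn False by (auto simp: goodpt_def)
        have I': "ks[j := Suc (ks ! j)] \<in> IT n dl" using IT_up[OF I jn g1] .
        have B': "boxok lo hi (ks[j := Suc (ks ! j)])" using box_up[OF Bx _ g2] L jn by simp
        have lt: "a j (ks ! j) < a j (Suc (ks ! j))" using inc dj by (simp add: Inc_def)
        from last_step[OF Hda Hdb mono n j S I' B' _ lt] show ?thesis
          using cont S by (auto simp: concl_def)
      next
        assume dec: "Dec dl (a j)"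
        have g1: "ks ! j \<noteq> kn ks j + dl" and g2: "lo ! j \<noteq> Some (ks ! j)"
          using jn False by (auto simp: goodpt_def)
        have I': "ks[j := ks ! j - 1] \<in> IT n dl" using IT_down[OF I jn g1] .
        have B': "boxok lo hi (ks[j := ks ! j - 1])" using box_down[OF Bx _ g2] L jn by simp
        have kk: "kn ks j + dl \<le> ks ! j" using I jn by (simp add: IT_def)
        then have st: "Suc (ks ! j - 1) = ks ! j" using g1 by simp
        have "dl \<le> ks ! j - 1" using IT_ge[OF I' jn] L jn by simp
        then have lt: "a j (ks ! j) < a j (ks ! j - 1)" using dec st
          by (metis Dec_def)
        from last_step[OF Hda Hdb mono n j S I' B' _ lt] show ?thesis
          using cont S st by (auto simp: concl_def)
      qed
    qed
  qed
qed

lemma typeok_vals: "typeok dl t f \<Longrightarrow> t = 0 \<or> t = 1 \<or> t = -1"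
  by (auto simp: typeok_def)

lemma typeok_nz: "typeok dl t f \<Longrightarrow> t \<noteq> 0 \<Longrightarrow> Inc dl f \<or> Dec dl f"
  by (auto simp: typeok_def)

lemma down_le: "typeok dl t f \<Longrightarrow> t = 0 \<or> t = 1 \<Longrightarrow> dl \<le> k - 1 \<Longrightarrow> f (k - 1) \<le> f k"
  apply (cases k)
   apply simp
  by (auto simp: typeok_def Inc_def)

lemma down_ge: "typeok dl t f \<Longrightarrow> t = 0 \<or> t = -1 \<Longrightarrow> dl \<le> k - 1 \<Longrightarrow> f k \<le> f (k - 1)"
  apply (cases k)
   apply simp
  by (auto simp: typeok_def Dec_def)

lemma up_le: "typeok dl t f \<Longrightarrow> t = 0 \<or> t = -1 \<Longrightarrow> dl \<le> k \<Longrightarrow> f (Suc k) \<le> f k"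
  by (auto simp: typeok_def Dec_def less_le)

lemma up_ge: "typeok dl t f \<Longrightarrow> t = 0 \<or> t = 1 \<Longrightarrow> dl \<le> k \<Longrightarrow> f k \<le> f (Suc k)"
  by (auto simp: typeok_def Inc_def less_le)

theorem abstract_main:
  assumes n: "n > 0"
   and types: "\<forall>i<n. typeok dl (ta i) (a i) \<and> typeok dl (tb i) (b i)"
   and Hda: "Hdom n dl a" and Hdb: "Hdom n dl (\<lambda>i k. - b i k)"
   and S0: "ks0 \<in> SS n dl lo hi a b c1 c2"
  shows "(hi ! 0 = None \<and> ((ta 0 = 0 \<and> tb 0 = 1) \<or> (ta 0 = -1 \<and> tb 0 = 0))) \<or>
         (\<exists>ks\<in>SS n dl lo hi a b c1 c2. goodpt n dl lo hi ks \<or>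
            ((\<forall>i<n. ta i \<noteq> 0 \<and> tb i \<noteq> 0) \<and>
             (Pmax n dl a c1 ks \<or> Pmax n dl (\<lambda>i k. - b i k) (- c2) ks)))"
proof -
  show ?thesis
  proof (cases "\<exists>j<n. (ta j = 0 \<or> ta j = 1) \<and> (tb j = 0 \<or> tb j = -1)")
    case True
    then obtain j where j: "j < n" "ta j = 0 \<or> ta j = 1" "tb j = 0 \<or> tb j = -1" by blast
    have safe: "ks[j := ks ! j - 1] \<in> SS n dl lo hi a b c1 c2"
      if S: "ks \<in> SS n dl lo hi a b c1 c2" and I': "ks[j := ks ! j - 1] \<in> IT n dl"
        and B': "boxok lo hi (ks[j := ks ! j - 1])" for ks
    proof -
      have L: "length ks = n" using S by (simp add: SS_def IT_def)
      have d: "dl \<le> ks ! j - 1" using IT_ge[OF I' j(1)] L j(1) by simp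
      have "a j (ks ! j - 1) \<le> a j (ks ! j)" using down_le[OF _ j(2) d] types j(1) by blast
      moreover have "b j (ks ! j) \<le> b j (ks ! j - 1)" using down_ge[OF _ j(3) d] types j(1) by blast
      ultimately show ?thesis using S I' B' FF_update[of j ks a "ks ! j - 1"]
        FF_update[of j ks b "ks ! j - 1"] L j(1) by (simp add: SS_def)
    qed
    have "\<exists>ks'\<in>SS n dl lo hi a b c1 c2. goodpt n dl lo hi ks'"
      using walk_down[OF j(1) safe] S0 by blast
    then show ?thesis by blast
  next
    case nd: False
    show ?thesis
    proof (cases "\<exists>j<n. (ta j = 0 \<or> ta j = -1) \<and> (tb j = 0 \<or> tb j = 1) \<and> (0 < j \<or> hi ! 0 \<noteq> None)")
      case True
      then obtain j where j: "j < n" "ta j = 0 \<or> ta j = -1" "tb j = 0 \<or> tb j = 1" "0 < j \<or> hi ! 0 \<noteq> None" by blast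
      have safe: "ks[j := Suc (ks ! j)] \<in> SS n dl lo hi a b c1 c2"
        if S: "ks \<in> SS n dl lo hi a b c1 c2" and I': "ks[j := Suc (ks ! j)] \<in> IT n dl"
          and B': "boxok lo hi (ks[j := Suc (ks ! j)])" for ks
      proof -
        have L: "length ks = n" using S by (simp add: SS_def IT_def)
        have d: "dl \<le> ks ! j" using IT_ge[OF _ j(1)] S by (simp add: SS_def)
        have "a j (Suc (ks ! j)) \<le> a j (ks ! j)" using up_le[OF _ j(2) d] types j(1) by blast
        moreover have "b j (ks ! j) \<le> b j (Suc (ks ! j))" using up_ge[OF _ j(3) d] types j(1) by blast
        ultimately show ?thesis using S I' B' FF_update[of j ks a "Suc (ks ! j)"]
          FF_update[of j ks b "Suc (ks ! j)"] L j(1) by (simp add: SS_def)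
      qed
      have "\<exists>ks'\<in>SS n dl lo hi a b c1 c2. goodpt n dl lo hi ks'"
        using walk_up[OF j(1) j(4) safe] S0 by blast
      then show ?thesis by blast
    next
      case nu: False
      show ?thesis
      proof (cases "hi ! 0 = None \<and> ((ta 0 = 0 \<and> tb 0 = 1) \<or> (ta 0 = -1 \<and> tb 0 = 0))")
        case True then show ?thesis by blast
      next
        case ne: False
        have nz: "\<forall>i<n. ta i \<noteq> 0 \<and> tb i \<noteq> 0"
        proof (intro allI impI)
          fix i assume i: "i < n"
          have va: "ta i = 0 \<or> ta i = 1 \<or> ta i = -1" using typeok_vals types i by blast
          have vb: "tb i = 0 \<or> tb i = 1 \<or> tb i = -1" using typeok_vals types i by blast
          show "ta i \<noteq> 0 \<and> tb i \<noteq> 0"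
          proof (rule ccontr)
            assume z: "\<not> (ta i \<noteq> 0 \<and> tb i \<noteq> 0)"
            have "\<not> ((ta i = 0 \<or> ta i = 1) \<and> (tb i = 0 \<or> tb i = -1))" using nd i by blast
            then have us: "(ta i = 0 \<or> ta i = -1) \<and> (tb i = 0 \<or> tb i = 1)" using z va vb by auto
            then have "\<not> (0 < i \<or> hi ! 0 \<noteq> None)" using nu i by blast
            then have "i = 0" "hi ! 0 = None" by auto
            then show False using ne us z \<open>\<not> ((ta i = 0 \<or> ta i = 1) \<and> (tb i = 0 \<or> tb i = -1))\<close> by auto
          qed
        qed
        have mono: "\<forall>i<n. (Inc dl (a i) \<or> Dec dl (a i)) \<and> (Inc dl (b i) \<or> Dec dl (b i))"
          using nz types typeok_nz by blast
        have "\<exists>ks'\<in>SS n dl lo hi a b c1 c2. concl n dl lo hi a b c1 c2 ks'"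
          using walk_last[OF Hda Hdb mono n refl, where m = "nat (c1 - FF a ks0)"] S0 by blast
        then show ?thesis using nz unfolding concl_def by blast
      qed
    qed
  qed
qed

lemma IT_chain:
  assumes "ks \<in> IT n dl" "i < k" "k < n"
  shows "ks ! k + dl \<le> ks ! i"
  using assms(2,3)
proof (induction k)
  case 0 then show ?case by simp
next
  case (Suc k)
  have L: "length ks = n" using assms(1) by (simp add: IT_def)
  have a: "kn ks k + dl \<le> ks ! k" using assms(1) Suc.prems by (auto simp: IT_def)
  have b: "kn ks k = ks ! Suc k" using Suc.prems L by (simp add: kn_def)
  show ?case
  proof (cases "i = k")
    case True then show ?thesis using a b by simp
  next
    case False
    then have "ks ! k + dl \<le> ks ! i" using Suc by simp
    then show ?thesis using a b by simp
  qed
qed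

lemma Hdom_gen:
  assumes dl: "1 \<le> dl" and bm: "mono bnd" and b0: "\<forall>q. 0 \<le> bnd q"
   and ab: "\<forall>j<n. \<forall>k. \<bar>a j k\<bar> \<le> bnd k"
   and gr: "\<forall>i<n. (\<forall>k. a i k = 0) \<or> (\<exists>g::int. (g = 1 \<or> g = -1) \<and>
              (\<forall>k\<ge>dl. 2 * int n * bnd (Suc k - dl) < g * (a i (Suc k) - a i k)))"
  shows "Hdom n dl a"
  unfolding Hdom_def
proof (intro ballI allI impI)
  fix w w' i assume w: "w \<in> IT n dl" and w': "w' \<in> IT n dl" and i: "i < n"
    and tk: "take i w = take i w'" and lt: "a i (w ! i) < a i (w' ! i)"
  have Lw: "length w = n" and Lw': "length w' = n" using w w' by (auto simp: IT_def)
  define Df where "Df k = a k (w' ! k) - a k (w ! k)" for k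
  have eqk: "k < i \<Longrightarrow> w ! k = w' ! k" for k using tk by (metis nth_take)
  have split: "{..<n} = {..<i} \<union> {i} \<union> {Suc i..<n}" using i by auto
  have "FF a w' - FF a w = (\<Sum>k<n. Df k)" by (simp add: FF_def Lw Lw' Df_def sum_subtractf)
  also have "\<dots> = (\<Sum>k<i. Df k) + Df i + (\<Sum>k\<in>{Suc i..<n}. Df k)"
    unfolding split by (subst sum.union_disjoint, auto)+
  also have "(\<Sum>k<i. Df k) = 0" using eqk by (simp add: Df_def)
  finally have FFd: "FF a w' - FF a w = Df i + (\<Sum>k\<in>{Suc i..<n}. Df k)" by simp
  define p where "p = max (w ! i) (w' ! i)"
  have tailb: "\<bar>Df k\<bar> \<le> 2 * bnd (p - dl)" if k: "k \<in> {Suc i..<n}" for k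
  proof -
    have "w ! k + dl \<le> w ! i" "w' ! k + dl \<le> w' ! i" using IT_chain[OF w, of i k] IT_chain[OF w', of i k] k by auto
    then have "w ! k \<le> p - dl" "w' ! k \<le> p - dl" unfolding p_def by auto
    then have "bnd (w ! k) \<le> bnd (p - dl)" "bnd (w' ! k) \<le> bnd (p - dl)" using bm by (auto dest: monoD)
    moreover have "\<bar>a k (w ! k)\<bar> \<le> bnd (w ! k)" "\<bar>a k (w' ! k)\<bar> \<le> bnd (w' ! k)" using ab k by auto
    ultimately show ?thesis unfolding Df_def by linarith
  qed
  have "\<bar>\<Sum>k\<in>{Suc i..<n}. Df k\<bar> \<le> (\<Sum>k\<in>{Suc i..<n}. \<bar>Df k\<bar>)" by (rule sum_abs)
  also have "\<dots> \<le> (\<Sum>k\<in>{Suc i..<n}. 2 * bnd (p - dl))" by (rule sum_mono) (rule tailb)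
  also have "\<dots> = int (n - Suc i) * (2 * bnd (p - dl))" by simp
  also have "\<dots> \<le> int n * (2 * bnd (p - dl))" using b0 by (intro mult_right_mono) auto
  finally have tail: "\<bar>\<Sum>k\<in>{Suc i..<n}. Df k\<bar> \<le> 2 * int n * bnd (p - dl)" by simp
  have dw: "dl \<le> w ! i" and dw': "dl \<le> w' ! i" using IT_ge[OF w i] IT_ge[OF w' i] by auto
  have nz: "\<not> (\<forall>k. a i k = 0)" using lt by (metis less_irrefl)
  then obtain g :: int where g: "g = 1 \<or> g = -1"
    and gk: "\<forall>k\<ge>dl. 2 * int n * bnd (Suc k - dl) < g * (a i (Suc k) - a i k)" using gr i by blast
  have main: "2 * int n * bnd (p - dl) < Df i"
    using g
  proof
    assume g1: "g = 1"
    have inc: "Inc dl (a i)" unfolding Inc_def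
    proof (intro allI impI)
      fix k assume "dl \<le> k"
      then have "2 * int n * bnd (Suc k - dl) < a i (Suc k) - a i k" using gk g1 by auto
      moreover have "0 \<le> 2 * int n * bnd (Suc k - dl)" using b0 by simp
      ultimately show "a i k < a i (Suc k)" by linarith
    qed
    have "w ! i < w' ! i" using lt inc dw dw' by (metis Inc_less linorder_neqE_nat less_asym)
    then have pp: "p = w' ! i" "w ! i \<le> p - 1" unfolding p_def by auto
    have "a i (w ! i) \<le> a i (p - 1)" using pp dw inc by (metis Inc_less order_le_less order_less_imp_le)
    moreover have "2 * int n * bnd (Suc (p - 1) - dl) < a i (Suc (p - 1)) - a i (p - 1)"
      using gk g1 pp dw by auto
    moreover have "Suc (p - 1) = p" using pp dw dl by auto
    ultimately show ?thesis unfolding Df_def using pp by simp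
  next
    assume g1: "g = -1"
    have dec: "Dec dl (a i)" unfolding Dec_def
    proof (intro allI impI)
      fix k assume "dl \<le> k"
      then have "2 * int n * bnd (Suc k - dl) < - (a i (Suc k) - a i k)" using gk g1 by auto
      moreover have "0 \<le> 2 * int n * bnd (Suc k - dl)" using b0 by simp
      ultimately show "a i (Suc k) < a i k" by linarith
    qed
    have "w' ! i < w ! i" using lt dec dw dw' by (metis Dec_less linorder_neqE_nat less_asym)
    then have pp: "p = w ! i" "w' ! i \<le> p - 1" unfolding p_def by auto
    have "a i (p - 1) \<le> a i (w' ! i)" using pp dw' dec by (metis Dec_less order_le_less order_less_imp_le)
    moreover have "2 * int n * bnd (Suc (p - 1) - dl) < - (a i (Suc (p - 1)) - a i (p - 1))"
      using gk g1 pp dw' by auto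
    moreover have "Suc (p - 1) = p" using pp dw' dl by auto
    ultimately show ?thesis unfolding Df_def using pp by simp
  qed
  show "FF a w < FF a w'" using FFd tail main by linarith
qed



lemma succ_props:
  assumes "infinite R" shows "succR R z \<in> R \<and> z < succR R z"
proof -
  obtain r where "r > z" "r \<in> R" using assms by (meson infinite_nat_iff_unbounded)
  then have "\<exists>r. r \<in> R \<and> z < r" by blast
  then show ?thesis unfolding succR_def by (rule LeastI_ex)
qed

lemma succ_least: "r \<in> R \<Longrightarrow> z < r \<Longrightarrow> succR R z \<le> r"
  unfolding succR_def by (rule Least_le) simp

lemma succ_mono: "infinite R \<Longrightarrow> z \<le> z' \<Longrightarrow> succR R z \<le> succR R z'"
  using succ_props[of R z'] succ_least[of "succR R z'" R z] by simp

lemma iter_mono: "infinite R \<Longrightarrow> z \<le> z' \<Longrightarrow> (succR R ^^ k) z \<le> (succR R ^^ k) z'"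
  by (induction k) (auto intro: succ_mono)

lemma iter_ge: "infinite R \<Longrightarrow> z + k \<le> (succR R ^^ k) z"
proof (induction k)
  case 0 then show ?case by simp
next
  case (Suc k)
  then show ?case using succ_props[OF Suc.prems, of "(succR R ^^ k) z"] by simp
qed

lemma iter_R: "infinite R \<Longrightarrow> z \<in> R \<Longrightarrow> (succR R ^^ k) z \<in> R"
  by (induction k) (auto simp: succ_props)

lemma iter_add: "(f ^^ (a + b)) z = (f ^^ a) ((f ^^ b) z)"
  by (simp add: funpow_add)

lemma iter_mono_k: "infinite R \<Longrightarrow> k \<le> k' \<Longrightarrow> (succR R ^^ k) z \<le> (succR R ^^ k') z"
proof -
  assume inf: "infinite R" and kk: "k \<le> k'"
  have "(succR R ^^ k') z = (succR R ^^ (k' - k)) ((succR R ^^ k) z)"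
    using kk iter_add[where f="succR R" and a="k' - k" and b=k and z=z] by simp
  then show ?thesis using iter_ge[OF inf, of "(succR R ^^ k) z" "k' - k"] by simp
qed

lemma iter_strict: "infinite R \<Longrightarrow> z < z' \<Longrightarrow> z' \<in> R \<Longrightarrow> (succR R ^^ k) z < (succR R ^^ k) z'"
proof (induction k)
  case 0 then show ?case by simp
next
  case (Suc k)
  have "(succR R ^^ k) z' \<in> R" using iter_R Suc.prems by blast
  then have "succR R ((succR R ^^ k) z) \<le> (succR R ^^ k) z'"
    using succ_least Suc by blast
  also have "\<dots> < succR R ((succR R ^^ k) z')" using succ_props[OF Suc.prems(1)] by blast
  finally show ?case by simp
qed

lemma enum_add: "enumR R (k + j) = (succR R ^^ j) (enumR R k)"
  unfolding enumR_def by (simp add: funpow_add add.commute)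

lemma enum_R: "infinite R \<Longrightarrow> enumR R k \<in> R"
proof -
  assume inf: "infinite R"
  then have "R \<noteq> {}" by auto
  then have "(LEAST r. r \<in> R) \<in> R" by (meson LeastI ex_in_conv)
  then show ?thesis unfolding enumR_def using iter_R[OF inf] by blast
qed

lemma op_app_cons0: "op_app R (0 # C) t = op_app R C (succR R t)"
proof -
  have "op_app R (0 # C) t = (\<Sum>i<Suc (length C). (0 # C) ! i * int ((succR R ^^ i) t))"
    by (simp add: op_app_def)
  also have "\<dots> = (\<Sum>i<length C. C ! i * int ((succR R ^^ Suc i) t))"
    by (subst sum.lessThan_Suc_shift) simp
  also have "\<dots> = op_app R C (succR R t)"
    by (simp add: op_app_def funpow_Suc_right del: funpow.simps)
  finally show ?thesis .
qed

lemma op_app_shift: "op_app R (replicate k 0 @ C) t = op_app R C ((succR R ^^ k) t)"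
proof (induction k arbitrary: t)
  case 0 then show ?case by simp
next
  case (Suc k)
  have "op_app R (replicate (Suc k) 0 @ C) t = op_app R (0 # (replicate k 0 @ C)) t" by simp
  also have "\<dots> = op_app R C ((succR R ^^ k) (succR R t))" using op_app_cons0 Suc by metis
  also have "\<dots> = op_app R C ((succR R ^^ Suc k) t)" by (simp add: funpow_Suc_right del: funpow.simps)
  finally show ?case .
qed

lemma op_app_scale: "op_app R (map (\<lambda>x. g * x) C) t = g * op_app R C t"
  by (simp add: op_app_def sum_distrib_left mult.assoc)

lemma op_app_neg: "op_app R (map uminus C) t = - op_app R C t"
  by (simp add: op_app_def sum_negf)

definition cf :: "operator \<Rightarrow> nat \<Rightarrow> int" where
  "cf C j = (if j < length C then C ! j else 0)"

lemma op_app_map: "op_app R (map f [0..<L]) t = (\<Sum>j<L. f j * int ((succR R ^^ j) t))"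
  by (simp add: op_app_def)

lemma op_app_ext:
  assumes "length C \<le> L"
  shows "op_app R C t = (\<Sum>j<L. cf C j * int ((succR R ^^ j) t))"
proof -
  have "op_app R C t = (\<Sum>j<length C. cf C j * int ((succR R ^^ j) t))"
    by (simp add: op_app_def cf_def)
  also have "\<dots> = (\<Sum>j<L. cf C j * int ((succR R ^^ j) t))"
    by (rule sum.mono_neutral_left) (use assms in \<open>auto simp: cf_def\<close>)
  finally show ?thesis .
qed

definition lsub :: "operator \<Rightarrow> operator \<Rightarrow> operator" where
  "lsub P Q = map (\<lambda>j. cf P j - cf Q j) [0..<max (length P) (length Q)]"

lemma op_app_lsub: "op_app R (lsub P Q) t = op_app R P t - op_app R Q t"
  unfolding lsub_def op_app_map
  by (simp add: op_app_ext[of P "max (length P) (length Q)"] op_app_ext[of Q "max (length P) (length Q)"]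
      left_diff_distrib sum_subtractf)

definition Dd :: "nat \<Rightarrow> operator \<Rightarrow> operator" where
  "Dd d C = lsub (replicate d 0 @ C) C"

lemma op_app_Dd: "op_app R (Dd d C) t = op_app R C ((succR R ^^ d) t) - op_app R C t"
  by (simp add: Dd_def op_app_lsub op_app_shift)

definition msum :: "operator \<Rightarrow> int" where
  "msum C = (\<Sum>j<length C. \<bar>C ! j\<bar>)"

lemma msum_nonneg: "0 \<le> msum C" by (simp add: msum_def sum_nonneg)

lemma op_app_bound:
  assumes "infinite R" "length C \<le> c"
  shows "\<bar>op_app R C t\<bar> \<le> msum C * int ((succR R ^^ c) t)"
proof -
  have "\<bar>op_app R C t\<bar> \<le> (\<Sum>j<length C. \<bar>C ! j * int ((succR R ^^ j) t)\<bar>)"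
    unfolding op_app_def by (rule sum_abs)
  also have "\<dots> \<le> (\<Sum>j<length C. \<bar>C ! j\<bar> * int ((succR R ^^ c) t))"
  proof (rule sum_mono)
    fix j assume "j \<in> {..<length C}"
    then have "(succR R ^^ j) t \<le> (succR R ^^ c) t" using iter_mono_k[OF assms(1)] assms(2) by simp
    then show "\<bar>C ! j * int ((succR R ^^ j) t)\<bar> \<le> \<bar>C ! j\<bar> * int ((succR R ^^ c) t)"
      by (simp add: abs_mult mult_left_mono)
  qed
  also have "\<dots> = msum C * int ((succR R ^^ c) t)" by (simp add: msum_def sum_distrib_right)
  finally show ?thesis .
qed

lemma sparse_inf: "sparse R \<Longrightarrow> infinite R" by (simp add: sparse_def)

lemma sparse_S2: "sparse R \<Longrightarrow> op_pos R a \<Longrightarrow> \<exists>E. \<forall>z\<in>R. op_app R a ((succR R ^^ E) z) > int z"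
  by (simp add: sparse_def)

lemma sparse_S1: "sparse R \<Longrightarrow> op_eq0 R a \<or> op_pos R a \<or> op_neg R a"
  by (simp add: sparse_def)

lemma growth_sigma:
  assumes sp: "sparse R"
  shows "\<exists>J. \<forall>z\<in>R. K * z \<le> (succR R ^^ J) z"
proof -
  have inf: "infinite R" using sp sparse_inf by blast
  have oa: "op_app R [-1, 1] z = int (succR R z) - int z" for z
    by (simp add: op_app_def numeral_2_eq_2 lessThan_Suc)
  have "op_pos R [-1, 1]" unfolding op_pos_def oa using succ_props[OF inf] by simp
  then obtain E where E: "\<forall>z\<in>R. op_app R [-1, 1] ((succR R ^^ E) z) > int z"
    using sparse_S2[OF sp] by blast
  have two: "2 * z \<le> (succR R ^^ Suc E) z" if z: "z \<in> R" for z
  proof -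
    have "int z < int (succR R ((succR R ^^ E) z)) - int ((succR R ^^ E) z)" using E z oa by simp
    moreover have "z \<le> (succR R ^^ E) z" using iter_ge[OF inf, of z E] by simp
    ultimately show ?thesis by simp
  qed
  have pw: "2 ^ k * z \<le> (succR R ^^ (Suc E * k)) z" if z: "z \<in> R" for k z
  proof (induction k)
    case 0 then show ?case by simp
  next
    case (Suc k)
    have "(succR R ^^ (Suc E * Suc k)) z = (succR R ^^ Suc E) ((succR R ^^ (Suc E * k)) z)"
      by (metis iter_add mult_Suc_right)
    moreover have "2 * (succR R ^^ (Suc E * k)) z \<le> (succR R ^^ Suc E) ((succR R ^^ (Suc E * k)) z)"
      using two iter_R[OF inf z] by blast
    ultimately show ?case using Suc by simp
  qed
  have "\<forall>z\<in>R. K * z \<le> (succR R ^^ (Suc E * K)) z"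
  proof
    fix z assume z: "z \<in> R"
    have "K * z \<le> 2 ^ K * z" by (simp add: less_imp_le_nat)
    then show "K * z \<le> (succR R ^^ (Suc E * K)) z" using pw[OF z, of K] by (rule order_trans)
  qed
  then show ?thesis by blast
qed

lemma pos_thresh: "op_pos R Q \<Longrightarrow> \<exists>T. \<forall>t\<in>R. T \<le> t \<longrightarrow> op_app R Q t > 0"
proof -
  assume "op_pos R Q"
  then obtain k where k: "{z\<in>R. \<not> op_app R Q z > 0} \<subseteq> {..<k}"
    unfolding op_pos_def using finite_nat_bounded by blast
  show ?thesis
  proof (intro exI[of _ k] ballI impI)
    fix t assume "t \<in> R" "k \<le> t"
    then show "op_app R Q t > 0" using k by force
  qed
qed

lemma pos_diff:
  assumes sp: "sparse R" and d: "d > 0" and P: "op_pos R P"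
  shows "op_pos R (Dd d P)"
proof (rule ccontr)
  assume np: "\<not> op_pos R (Dd d P)"
  have inf: "infinite R" using sp sparse_inf by blast
  have "op_eq0 R (Dd d P) \<or> op_neg R (Dd d P)" using sparse_S1[OF sp, of "Dd d P"] np by blast
  then have fin: "finite {z\<in>R. op_app R (Dd d P) z > 0}"
  proof
    assume "op_eq0 R (Dd d P)"
    then have "{z\<in>R. op_app R (Dd d P) z > 0} = {}" by (auto simp: op_eq0_def)
    then show ?thesis by (metis finite.emptyI)
  next
    assume "op_neg R (Dd d P)"
    then show ?thesis unfolding op_neg_def by (rule rev_finite_subset) auto
  qed
  then obtain k where k: "{z\<in>R. op_app R (Dd d P) z > 0} \<subseteq> {..<k}"
    using finite_nat_bounded by blast
  obtain t1 where t1: "t1 \<in> R" "k < t1" using inf by (meson infinite_nat_iff_unbounded)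
  have dec: "op_app R P ((succR R ^^ (d * m)) t1) \<le> op_app R P t1" for m
  proof (induction m)
    case 0 then show ?case by simp
  next
    case (Suc m)
    let ?t = "(succR R ^^ (d * m)) t1"
    have tR: "?t \<in> R" using iter_R[OF inf t1(1)] .
    have "t1 \<le> ?t" using iter_ge[OF inf, of t1] by (meson le_add1 order_trans)
    then have "\<not> op_app R (Dd d P) ?t > 0" using k tR t1 by force
    then have "op_app R P ((succR R ^^ d) ?t) \<le> op_app R P ?t" by (simp add: op_app_Dd)
    moreover have "(succR R ^^ d) ?t = (succR R ^^ (d * Suc m)) t1"
      by (metis iter_add mult_Suc_right)
    ultimately show ?case using Suc by simp
  qed
  obtain E where E: "\<forall>z\<in>R. op_app R P ((succR R ^^ E) z) > int z" using sparse_S2[OF sp P] by blast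
  define m where "m = E + nat (op_app R P t1) + 1"
  have dm: "m \<le> d * m" using d by simp
  have "E \<le> d * m" using dm m_def by simp
  then have eq: "(succR R ^^ (d * m)) t1 = (succR R ^^ E) ((succR R ^^ (d * m - E)) t1)"
    by (metis iter_add le_add_diff_inverse)
  have zR: "(succR R ^^ (d * m - E)) t1 \<in> R" using iter_R[OF inf t1(1)] .
  have "int ((succR R ^^ (d * m - E)) t1) < op_app R P ((succR R ^^ (d * m)) t1)"
    using E zR eq by simp
  moreover have "d * m - E \<le> (succR R ^^ (d * m - E)) t1" using iter_ge[OF inf, of t1] by (meson le_add2 order_trans)
  moreover have "op_app R P t1 < int (d * m - E)"
  proof -
    have "nat (op_app R P t1) + 1 \<le> d * m - E" using dm m_def by simp
    then show ?thesis by linarith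
  qed
  ultimately show False using dec[of m] by simp
qed

lemma Dd_growth:
  assumes sp: "sparse R" and d: "d > 0" and P: "op_pos R P"
  shows "\<exists>D1. \<forall>D\<ge>D1. \<forall>y\<in>R. int K * int ((succR R ^^ c) y) < op_app R (Dd d P) ((succR R ^^ D) y)"
proof -
  have inf: "infinite R" using sp sparse_inf by blast
  obtain E where E: "\<forall>z\<in>R. op_app R (Dd d P) ((succR R ^^ E) z) > int z"
    using sparse_S2[OF sp pos_diff[OF sp d P]] by blast
  obtain J where J: "\<forall>z\<in>R. K * z \<le> (succR R ^^ J) z" using growth_sigma[OF sp] by blast
  show ?thesis
  proof (intro exI[of _ "E + J + c"] allI impI ballI)
    fix D y assume D: "E + J + c \<le> D" and y: "y \<in> R"
    have eq: "(succR R ^^ D) y = (succR R ^^ E) ((succR R ^^ (D - E)) y)"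
      using D by (metis iter_add le_add1 le_add_diff_inverse order_trans)
    have zR: "(succR R ^^ (D - E)) y \<in> R" using iter_R[OF inf y] .
    have a: "int ((succR R ^^ (D - E)) y) < op_app R (Dd d P) ((succR R ^^ D) y)" using E zR eq by simp
    have "(succR R ^^ (J + c)) y \<le> (succR R ^^ (D - E)) y" using iter_mono_k[OF inf] D by simp
    moreover have "(succR R ^^ (J + c)) y = (succR R ^^ J) ((succR R ^^ c) y)" by (rule iter_add)
    moreover have "K * (succR R ^^ c) y \<le> (succR R ^^ J) ((succR R ^^ c) y)"
      using J iter_R[OF inf y] by blast
    ultimately have "K * (succR R ^^ c) y \<le> (succR R ^^ (D - E)) y" by simp
    then have "int K * int ((succR R ^^ c) y) \<le> int ((succR R ^^ (D - E)) y)" by (metis of_nat_le_iff of_nat_mult)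
    then show "int K * int ((succR R ^^ c) y) < op_app R (Dd d P) ((succR R ^^ D) y)" using a by simp
  qed
qed

definition sg :: "nat set \<Rightarrow> operator \<Rightarrow> int" where
  "sg R C = (if op_pos R C then 1 else -1)"

lemma sg_pos:
  assumes sp: "sparse R" and ne: "\<not> op_eq0 R C"
  shows "op_pos R (map (\<lambda>x. sg R C * x) C)"
proof (cases "op_pos R C")
  case True
  then show ?thesis unfolding op_pos_def op_app_scale sg_def by simp
next
  case False
  then have "op_neg R C" using sparse_S1[OF sp, of C] ne by blast
  then have "finite {z\<in>R. \<not> (- op_app R C z) > 0}" unfolding op_neg_def by simp
  then show ?thesis unfolding op_pos_def op_app_scale sg_def using False by simp
qed

lemma op_good:
  assumes sp: "sparse R" and d: "d > 0" and ne: "\<not> op_eq0 R C"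
  shows "(\<exists>T. \<forall>t\<in>R. T \<le> t \<longrightarrow> 0 < sg R C * (op_app R C ((succR R ^^ d) t) - op_app R C t)) \<and>
    (\<exists>D1. \<forall>D\<ge>D1. \<forall>y\<in>R. int K * int ((succR R ^^ c) y) <
        sg R C * (op_app R C ((succR R ^^ d) ((succR R ^^ D) y)) - op_app R C ((succR R ^^ D) y)))"
proof -
  let ?P = "map (\<lambda>x. sg R C * x) C"
  have P: "op_pos R ?P" using sg_pos[OF sp ne] .
  have eq: "op_app R (Dd d ?P) t = sg R C * (op_app R C ((succR R ^^ d) t) - op_app R C t)" for t
    by (simp add: op_app_Dd op_app_scale right_diff_distrib)
  have "op_pos R (Dd d ?P)" using pos_diff[OF sp d P] .
  then have 1: "\<exists>T. \<forall>t\<in>R. T \<le> t \<longrightarrow> 0 < sg R C * (op_app R C ((succR R ^^ d) t) - op_app R C t)"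
    using pos_thresh[of R "Dd d ?P"] unfolding eq by blast
  have 2: "\<exists>D1. \<forall>D\<ge>D1. \<forall>y\<in>R. int K * int ((succR R ^^ c) y) <
        sg R C * (op_app R C ((succR R ^^ d) ((succR R ^^ D) y)) - op_app R C ((succR R ^^ D) y))"
    using Dd_growth[OF sp d P, of K c] unfolding eq by blast
  show ?thesis using 1 2 by blast
qed

lemma ev_conj: "(\<exists>T. \<forall>T'\<ge>T. P T') \<Longrightarrow> (\<exists>T. \<forall>T'\<ge>T. Q T') \<Longrightarrow> (\<exists>T. \<forall>T'\<ge>(T::nat). P T' \<and> Q T')"
proof -
  assume "\<exists>T. \<forall>T'\<ge>T. P T'" "\<exists>T. \<forall>T'\<ge>T. Q T'"
  then obtain T1 T2 where "\<forall>T'\<ge>T1. P T'" "\<forall>T'\<ge>T2. Q T'" by blast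
  then show ?thesis by (intro exI[of _ "max T1 T2"]) auto
qed

lemma ev_uniform: fixes n :: nat and Q :: "nat \<Rightarrow> nat \<Rightarrow> bool" shows "(\<forall>i<n. \<exists>T. \<forall>T'\<ge>T. Q i T') \<Longrightarrow> \<exists>T. \<forall>i<n. \<forall>T'\<ge>(T::nat). Q i T'"
proof (induction n)
  case 0 then show ?case by simp
next
  case (Suc n)
  then obtain T1 where T1: "\<forall>i<n. \<forall>T'\<ge>T1. Q i T'" by auto
  obtain T2 where T2: "\<forall>T'\<ge>T2. Q n T'" using Suc.prems by auto
  show ?case
  proof (intro exI[of _ "max T1 T2"] allI impI)
    fix i T' assume "i < Suc n" "max T1 T2 \<le> T'"
    then show "Q i T'" using T1 T2 by (cases "i = n") auto
  qed
qed

definition eN :: "nat set \<Rightarrow> nat \<Rightarrow> nat \<Rightarrow> nat \<Rightarrow> nat" where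
  "eN R N d t = enumR R (N + d * t)"

lemma eN_R: "infinite R \<Longrightarrow> eN R N d t \<in> R"
  by (simp add: eN_def enum_R)

lemma eN_shift: "(succR R ^^ (d * j)) (eN R N d t) = eN R N d (t + j)"
  unfolding eN_def by (metis enum_add add.assoc distrib_left)

lemma eN_smono: assumes "infinite R" "d > 0" shows "strict_mono (eN R N d)"
  unfolding strict_mono_Suc_iff
proof
  fix t
  have "eN R N d (Suc t) = (succR R ^^ (d * 1)) (eN R N d t)" using eN_shift[where R=R and d=d and j=1 and N=N and t=t] by simp
  moreover have "eN R N d t + d \<le> (succR R ^^ d) (eN R N d t)" using iter_ge[OF assms(1)] by blast
  ultimately show "eN R N d t < eN R N d (Suc t)" using assms(2) by simp
qed

lemma least_range: "strict_mono e \<Longrightarrow> (LEAST r. r \<in> range (e::nat\<Rightarrow>nat)) = e 0"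
  by (rule Least_equality) (auto simp: strict_mono_less_eq)

lemma znext_map:
  assumes "Rt = range e" "strict_mono e" "i < length ks"
  shows "znext Rt (map e ks) i = e (kn ks i)"
  using assms least_range[OF assms(2)] by (simp add: znext_def kn_def)

lemma tuples_transfer:
  assumes Rt: "Rt = range e" and sm: "strict_mono e" and sh: "\<forall>t. (succR R ^^ D) (e t) = e (t + dl)"
  shows "map e ks \<in> tuples R Rt n D \<longleftrightarrow> ks \<in> IT n dl"
proof -
  have "(\<forall>i<n. (succR R ^^ D) (znext Rt (map e ks) i) \<le> map e ks ! i) \<longleftrightarrow> (\<forall>i<n. kn ks i + dl \<le> ks ! i)"
    if L: "length ks = n"
  proof -
    have "(succR R ^^ D) (znext Rt (map e ks) i) \<le> map e ks ! i \<longleftrightarrow> kn ks i + dl \<le> ks ! i" if i: "i < n" for i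
      using znext_map[OF Rt sm, of i ks] i L sh by (simp add: strict_mono_less_eq[OF sm])
    then show ?thesis by blast
  qed
  then show ?thesis unfolding tuples_def IT_def using Rt by auto
qed

lemma tuples_surj:
  assumes Rt: "Rt = range e" and z: "z \<in> tuples R Rt n D"
  shows "z = map e (map (inv e) z)"
proof -
  have "set z \<subseteq> range e" using z Rt by (simp add: tuples_def)
  then show ?thesis by (simp add: map_idI f_inv_into_f subset_iff)
qed

lemma good_transfer:
  assumes Rt: "Rt = range e" and sm: "strict_mono e" and sh: "\<forall>t. (succR R ^^ D) (e t) = e (t + dl)"
    and i: "i < length ks"
  shows "(map e ks ! i = (succR R ^^ D) (znext Rt (map e ks) i)) \<longleftrightarrow> ks ! i = kn ks i + dl"
  using znext_map[OF Rt sm i] sh i strict_mono_eq[OF sm] by simp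

lemma low_transfer:
  assumes sm: "strict_mono e" and uR: "\<forall>a. uo = Some a \<longrightarrow> a \<in> range e"
  shows "lower_ok uo (e k) \<longleftrightarrow> lower_ok (map_option (inv e) uo) k"
    and "upper_ok uo (e k) \<longleftrightarrow> upper_ok (map_option (inv e) uo) k"
    and "uo = Some (e k) \<longleftrightarrow> map_option (inv e) uo = Some k"
proof -
  have inj: "inj e" using sm strict_mono_imp_inj_on by blast
  show "lower_ok uo (e k) \<longleftrightarrow> lower_ok (map_option (inv e) uo) k"
  proof (cases uo)
    case None then show ?thesis by (simp add: lower_ok_def)
  next
    case (Some a)
    then have "a = e (inv e a)" using uR by (simp add: f_inv_into_f)
    then show ?thesis using Some by (metis lower_ok_def option.simps(5) option.simps(9) strict_mono_less_eq[OF sm])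
  qed
  show "upper_ok uo (e k) \<longleftrightarrow> upper_ok (map_option (inv e) uo) k"
  proof (cases uo)
    case None then show ?thesis by (simp add: upper_ok_def)
  next
    case (Some a)
    then have "a = e (inv e a)" using uR by (simp add: f_inv_into_f)
    then show ?thesis using Some by (metis upper_ok_def option.simps(5) option.simps(9) strict_mono_less_eq[OF sm])
  qed
  show "uo = Some (e k) \<longleftrightarrow> map_option (inv e) uo = Some k"
  proof (cases uo)
    case None then show ?thesis by simp
  next
    case (Some a)
    then have "a = e (inv e a)" using uR by (simp add: f_inv_into_f)
    then show ?thesis using Some inj by (auto simp: inv_f_f)
  qed
qed

lemma dot_transfer: "dotR R Cs (map e ks) = FF (\<lambda>i k. op_app R (Cs ! i) (e k)) ks"
  by (simp add: dotR_def FF_def)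

lemma dot_neg_transfer:
  assumes "length ks = length B"
  shows "dotR R (neg_ops B) (map e ks) = FF (\<lambda>i k. - op_app R (B ! i) (e k)) ks"
  unfolding dotR_def FF_def using assms by (intro sum.cong) (auto simp: neg_ops_def op_app_neg)

lemma Pdelta_eq:
  assumes Rt: "Rt = range e" and sm: "strict_mono e" and sh: "\<forall>t. (succR R ^^ D) (e t) = e (t + dl)"
    and ks: "ks \<in> IT n dl" and lt: "FF f ks < c" and pm: "Pmax n dl f c ks"
    and dot: "\<forall>w. length w = n \<longrightarrow> dotR R Cs (map e w) = FF f w"
  shows "P_Delta R Rt n D c Cs = map e ks"
proof -
  have Tc: "z \<in> tuples R Rt n D \<Longrightarrow> \<exists>w\<in>IT n dl. z = map e w" for z
    using tuples_surj[OF Rt, of z] tuples_transfer[OF Rt sm sh] by metis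
  have kT: "map e ks \<in> tuples R Rt n D" using tuples_transfer[OF Rt sm sh] ks by blast
  have Lk: "length ks = n" using ks by (simp add: IT_def)
  have dk: "dotR R Cs (map e ks) = FF f ks" using dot Lk by blast
  have ex: "\<exists>z\<in>tuples R Rt n D. dotR R Cs z < c" using kT dk lt by (metis)
  have "maxA R Cs {z \<in> tuples R Rt n D. dotR R Cs z < c} = map e ks"
    unfolding maxA_def
  proof (rule the_equality)
    show "map e ks \<in> {z \<in> tuples R Rt n D. dotR R Cs z < c} \<and>
      (\<forall>w\<in>{z \<in> tuples R Rt n D. dotR R Cs z < c}. dotR R Cs w \<le> dotR R Cs (map e ks))"
    proof (intro conjI ballI)
      show "map e ks \<in> {z \<in> tuples R Rt n D. dotR R Cs z < c}" using kT dk lt by simp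
      fix z assume z: "z \<in> {z \<in> tuples R Rt n D. dotR R Cs z < c}"
      then obtain w where w: "w \<in> IT n dl" "z = map e w" using Tc by blast
      have dw: "dotR R Cs z = FF f w" using dot w by (simp add: IT_def)
      show "dotR R Cs z \<le> dotR R Cs (map e ks)"
      proof (cases "w = ks")
        case True then show ?thesis using w by simp
      next
        case False
        then have "FF f w < FF f ks \<or> c \<le> FF f w" using pm w unfolding Pmax_def by blast
        then show ?thesis using z dw dk by auto
      qed
    qed
  next
    fix z assume z: "z \<in> {z \<in> tuples R Rt n D. dotR R Cs z < c} \<and>
      (\<forall>w\<in>{z \<in> tuples R Rt n D. dotR R Cs z < c}. dotR R Cs w \<le> dotR R Cs z)"
    then obtain w where w: "w \<in> IT n dl" "z = map e w" using Tc by blast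
    have dw: "dotR R Cs z = FF f w" using dot w by (simp add: IT_def)
    have "FF f ks \<le> FF f w" using z kT dk lt dw by auto
    moreover have "FF f w < c" using z dw by simp
    ultimately have "w = ks" using pm w unfolding Pmax_def by force
    then show "z = map e ks" using w by simp
  qed
  then show ?thesis unfolding P_Delta_def using ex by simp
qed

lemma typeok_from:
  assumes eR: "\<forall>k. e k \<in> R" and ege: "\<forall>k. k \<le> e k" and es: "\<forall>k. (succR R ^^ d) (e k) = e (Suc k)"
    and T: "T0 \<le> dl"
    and G: "op_eq0 R C \<or> (\<forall>t\<in>R. T0 \<le> t \<longrightarrow> 0 < sg R C * (op_app R C ((succR R ^^ d) t) - op_app R C t))"
  shows "typeok dl (if op_eq0 R C then 0 else sg R C) (\<lambda>k. op_app R C (e k))"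
proof (cases "op_eq0 R C")
  case True
  then show ?thesis using eR by (simp add: typeok_def op_eq0_def)
next
  case False
  then have G': "\<forall>k\<ge>dl. 0 < sg R C * (op_app R C (e (Suc k)) - op_app R C (e k))"
    using G eR ege es T by (metis order_trans)
  show ?thesis
  proof (cases "op_pos R C")
    case True
    then have "Inc dl (\<lambda>k. op_app R C (e k))" using G' by (simp add: Inc_def sg_def)
    then show ?thesis using True False by (simp add: typeok_def sg_def)
  next
    case F2: False
    then have "Dec dl (\<lambda>k. op_app R C (e k))" using G' by (simp add: Dec_def sg_def)
    then show ?thesis using F2 False by (simp add: typeok_def sg_def)
  qed
qed

lemma gr_from:
  assumes eR: "\<forall>k. e k \<in> R" and esh: "\<forall>q j. (succR R ^^ (d * j)) (e q) = e (q + j)"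
    and dl: "1 \<le> dl" and s: "s = 1 \<or> s = (-1::int)"
    and G: "op_eq0 R C \<or> (\<forall>y\<in>R. int K * int ((succR R ^^ c) y) <
        sg R C * (op_app R C ((succR R ^^ d) ((succR R ^^ (d * dl - d)) y)) - op_app R C ((succR R ^^ (d * dl - d)) y)))"
    and Kint: "int K = 2 * int n * W"
  shows "(\<forall>k. s * op_app R C (e k) = 0) \<or> (\<exists>g::int. (g = 1 \<or> g = -1) \<and>
     (\<forall>k\<ge>dl. 2 * int n * (W * int ((succR R ^^ c) (e (Suc k - dl))))
        < g * (s * op_app R C (e (Suc k)) - s * op_app R C (e k))))"
proof (cases "op_eq0 R C")
  case True
  then show ?thesis using eR by (simp add: op_eq0_def)
next
  case False
  have sgv: "sg R C = 1 \<or> sg R C = -1" by (simp add: sg_def)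
  show ?thesis
  proof (rule disjI2, intro exI[of _ "s * sg R C"] conjI allI impI)
    show "s * sg R C = 1 \<or> s * sg R C = -1" using s sgv by auto
    fix k assume k: "dl \<le> k"
    let ?y = "e (Suc k - dl)"
    have dd: "d * dl - d = d * (dl - 1)" by (simp add: right_diff_distrib')
    have ek: "(succR R ^^ (d * dl - d)) ?y = e k"
      using esh k dl unfolding dd by (metis Suc_diff_le add.commute add_Suc_right diff_Suc_1 le_add_diff_inverse2 le_add1 order_trans Nat.add_diff_assoc2 plus_1_eq_Suc)
    have ek1: "(succR R ^^ d) (e k) = e (Suc k)" using esh[rule_format, of 1 k] by simp
    have a: "int K * int ((succR R ^^ c) ?y) < sg R C * (op_app R C (e (Suc k)) - op_app R C (e k))"
      using G False eR ek ek1 by metis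
    have eq: "s * sg R C * (s * op_app R C (e (Suc k)) - s * op_app R C (e k))
       = sg R C * (op_app R C (e (Suc k)) - op_app R C (e k))"
      using s by (auto simp: algebra_simps)
    have l: "2 * int n * (W * int ((succR R ^^ c) ?y)) = int K * int ((succR R ^^ c) ?y)"
      using Kint by (simp add: mult.assoc)
    show "2 * int n * (W * int ((succR R ^^ c) ?y))
        < s * sg R C * (s * op_app R C (e (Suc k)) - s * op_app R C (e k))"
      unfolding l eq using a .
  qed
qed

lemma dagger_transfer:
  assumes sm: "strict_mono e" and Rt: "Rt = range e" and Lks: "length ks = n"
    and Lu: "length u = n" and Lv: "length v = n"
    and uR: "\<forall>i<n. \<forall>a. u ! i = Some a \<longrightarrow> a \<in> Rt" and vR: "\<forall>i<n. \<forall>a. v ! i = Some a \<longrightarrow> a \<in> Rt"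
  shows "dagger R A B x y1 y2 u v (map e ks) \<longleftrightarrow>
    (FF (\<lambda>i k. op_app R (A ! i) (e k)) ks < x - y1 \<and> x - y2 < FF (\<lambda>i k. op_app R (B ! i) (e k)) ks \<and>
     boxok (map (map_option (inv e)) u) (map (map_option (inv e)) v) ks)"
proof -
  have bx: "(\<forall>i<length (map e ks). lower_ok (u ! i) (map e ks ! i) \<and> upper_ok (v ! i) (map e ks ! i))
     \<longleftrightarrow> boxok (map (map_option (inv e)) u) (map (map_option (inv e)) v) ks"
    unfolding boxok_def using low_transfer[OF sm] uR vR Lu Lv Lks Rt by auto
  show ?thesis unfolding dagger_def bx[symmetric] dot_transfer by auto
qed



theorem mainTheorem10:
  fixes R Rt :: "nat set" and d n :: nat and A B :: "operator list"
  assumes "sparse R" and "congruence_periodic R"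
    and "d > 0" and "sub_d Rt d R"
    and "n > 0" and "length A = n" and "length B = n"
  shows "\<exists>D0. \<forall>D. d dvd D \<and> D \<ge> D0 \<longrightarrow>
    (\<forall>(x::int) (y1::int) (y2::int) (u::nat option list) (v::nat option list).
       length u = n \<and> length v = n \<and>
       (\<forall>i<n. \<forall>a. u ! i = Some a \<longrightarrow> a \<in> Rt) \<and>
       (\<forall>i<n. \<forall>a. v ! i = Some a \<longrightarrow> a \<in> Rt) \<and>
       (\<exists>z\<in>tuples R Rt n D. dagger R A B x y1 y2 u v z)
       \<longrightarrow>
       (v ! 0 = None \<and>
          ((op_eq0 R (A ! 0) \<and> op_pos R (B ! 0)) \<or> (op_neg R (A ! 0) \<and> op_eq0 R (B ! 0))))
       \<or>
       (\<exists>z\<in>tuples R Rt n D. dagger R A B x y1 y2 u v z \<and>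
          ((\<exists>i<n. z ! i = (succR R ^^ D) (znext Rt z i)) \<or>
           (\<exists>i<n. u ! i = Some (z ! i) \<or> v ! i = Some (z ! i)) \<or>
           ((\<forall>i<n. \<not> op_eq0 R (A ! i) \<and> \<not> op_eq0 R (B ! i)) \<and>
            (z = P_Delta R Rt n D (x - y1) A \<or> z = P_Delta R Rt n D (y2 - x) (neg_ops B))))))"
proof -
  have sp: "sparse R" using assms(1) .
  have inf: "infinite R" using sp sparse_inf by blast
  have d0: "d > 0" using assms(3) .
  obtain N where N: "Rt = {enumR R (N + d * t) | t. True}" using assms(4) sub_d_def by blast
  define e where "e = eN R N d"
  have Rt: "Rt = range e" using N by (auto simp: e_def eN_def)
  have sm: "strict_mono e" using eN_smono[OF inf d0] e_def by simp
  have eR: "\<forall>k. e k \<in> R" using eN_R[OF inf] e_def by simp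
  have ege: "\<forall>k. k \<le> e k" using strict_mono_imp_increasing[OF sm] by simp
  have esh: "\<forall>q j. (succR R ^^ (d * j)) (e q) = e (q + j)" using eN_shift e_def by simp
  have es1: "\<forall>k. (succR R ^^ d) (e k) = e (Suc k)" using esh by (metis Suc_eq_plus1 mult.right_neutral)
  define c where "c = (\<Sum>i<n. length (A ! i) + length (B ! i))"
  define W where "W = (\<Sum>i<n. msum (A ! i) + msum (B ! i))"
  have W0: "0 \<le> W" unfolding W_def by (intro sum_nonneg add_nonneg_nonneg msum_nonneg)
  have cA: "length (A ! i) \<le> c" "length (B ! i) \<le> c" if i: "i < n" for i
  proof -
    have "length (A ! i) + length (B ! i) \<le> c" unfolding c_def
      by (rule member_le_sum[where f = "\<lambda>i. length (A ! i) + length (B ! i)"]) (use i in auto)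
    then show "length (A ! i) \<le> c" "length (B ! i) \<le> c" by auto
  qed
  have WA: "msum (A ! i) \<le> W" "msum (B ! i) \<le> W" if i: "i < n" for i
  proof -
    have "msum (A ! i) + msum (B ! i) \<le> W" unfolding W_def
      by (rule member_le_sum[where f = "\<lambda>i. msum (A ! i) + msum (B ! i)"])
         (use i in \<open>auto intro: add_nonneg_nonneg msum_nonneg\<close>)
    then show "msum (A ! i) \<le> W" "msum (B ! i) \<le> W" using msum_nonneg[of "A ! i"] msum_nonneg[of "B ! i"] by auto
  qed
  define K where "K = 2 * n * nat W"
  have Kint: "int K = 2 * int n * W" using W0 by (simp add: K_def)
  define Good where "Good C T \<longleftrightarrow> op_eq0 R C \<or>
     ((\<forall>t\<in>R. T \<le> t \<longrightarrow> 0 < sg R C * (op_app R C ((succR R ^^ d) t) - op_app R C t)) \<and>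
      (\<forall>y\<in>R. int K * int ((succR R ^^ c) y) <
        sg R C * (op_app R C ((succR R ^^ d) ((succR R ^^ T) y)) - op_app R C ((succR R ^^ T) y))))" for C T
  have evG: "\<exists>T. \<forall>T'\<ge>T. Good C T'" for C
  proof (cases "op_eq0 R C")
    case True then show ?thesis by (simp add: Good_def)
  next
    case False
    from op_good[OF sp d0 False, of K c] obtain T1 D1 where
      T1: "\<forall>t\<in>R. T1 \<le> t \<longrightarrow> 0 < sg R C * (op_app R C ((succR R ^^ d) t) - op_app R C t)" and
      D1: "\<forall>D\<ge>D1. \<forall>y\<in>R. int K * int ((succR R ^^ c) y) <
        sg R C * (op_app R C ((succR R ^^ d) ((succR R ^^ D) y)) - op_app R C ((succR R ^^ D) y))"
      by blast
    show ?thesis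
    proof (intro exI[of _ "max T1 D1"] allI impI)
      fix T' assume "max T1 D1 \<le> T'"
      then show "Good C T'" unfolding Good_def using T1 D1 by auto
    qed
  qed
  have "\<forall>i<n. \<exists>T. \<forall>T'\<ge>T. Good (A ! i) T' \<and> Good (B ! i) T'"
  proof (intro allI impI)
    fix i assume "i < n"
    show "\<exists>T. \<forall>T'\<ge>T. Good (A ! i) T' \<and> Good (B ! i) T'" by (rule ev_conj[OF evG evG])
  qed
  from ev_uniform[OF this] obtain T0 where T0: "\<forall>i<n. \<forall>T'\<ge>T0. Good (A ! i) T' \<and> Good (B ! i) T'"
    by blast
  show ?thesis
  proof (rule exI[of _ "d * (T0 + 1) + T0 + d"], rule allI, rule impI)
    fix D assume DD: "d dvd D \<and> d * (T0 + 1) + T0 + d \<le> D"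
    then obtain dl where D: "D = d * dl" by blast
    have "d * (T0 + 1) \<le> d * dl" using DD D by simp
    then have dl1: "T0 + 1 \<le> dl" using d0 by (metis mult_le_cancel1)
    have DT: "T0 \<le> d * dl - d" using DD D by simp
    have sh: "\<forall>t. (succR R ^^ D) (e t) = e (t + dl)" using esh D by simp
    have GA: "Good (A ! i) T0 \<and> Good (A ! i) (d * dl - d) \<and> Good (B ! i) T0 \<and> Good (B ! i) (d * dl - d)"
      if "i < n" for i using T0 that DT by blast
    define a where "a i k = op_app R (A ! i) (e k)" for i k
    define b where "b i k = op_app R (B ! i) (e k)" for i k
    define ta where "ta i = (if op_eq0 R (A ! i) then 0 else sg R (A ! i))" for i
    define tb where "tb i = (if op_eq0 R (B ! i) then 0 else sg R (B ! i))" for i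
    have typs: "\<forall>i<n. typeok dl (ta i) (a i) \<and> typeok dl (tb i) (b i)"
    proof (intro allI impI conjI)
      fix i assume i: "i < n"
      show "typeok dl (ta i) (a i)" unfolding ta_def a_def
        by (rule typeok_from[OF eR ege es1, of T0]) (use dl1 GA[OF i] in \<open>auto simp: Good_def\<close>)
      show "typeok dl (tb i) (b i)" unfolding tb_def b_def
        by (rule typeok_from[OF eR ege es1, of T0]) (use dl1 GA[OF i] in \<open>auto simp: Good_def\<close>)
    qed
    define bnd where "bnd q = W * int ((succR R ^^ c) (e q))" for q
    have bm: "mono bnd"
    proof (rule monoI)
      fix q q' :: nat assume "q \<le> q'"
      then have "e q \<le> e q'" using sm by (simp add: strict_mono_less_eq)
      then have "(succR R ^^ c) (e q) \<le> (succR R ^^ c) (e q')" using iter_mono[OF inf] by blast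
      then show "bnd q \<le> bnd q'" unfolding bnd_def using W0 by (simp add: mult_left_mono)
    qed
    have b0: "\<forall>q. 0 \<le> bnd q" using W0 by (simp add: bnd_def)
    have boundC: "\<bar>op_app R C (e k)\<bar> \<le> bnd k" if "length C \<le> c" "msum C \<le> W" for C k
    proof -
      have "\<bar>op_app R C (e k)\<bar> \<le> msum C * int ((succR R ^^ c) (e k))" using op_app_bound[OF inf that(1)] .
      also have "\<dots> \<le> W * int ((succR R ^^ c) (e k))" using that(2) by (simp add: mult_right_mono)
      finally show ?thesis by (simp add: bnd_def)
    qed
    have dl1': "1 \<le> dl" using dl1 by simp
    have Hda: "Hdom n dl a"
    proof (rule Hdom_gen[OF dl1' bm b0])
      show "\<forall>j<n. \<forall>k. \<bar>a j k\<bar> \<le> bnd k" using boundC cA WA by (simp add: a_def)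
      show "\<forall>i<n. (\<forall>k. a i k = 0) \<or> (\<exists>g. (g = 1 \<or> g = - 1) \<and> (\<forall>k\<ge>dl. 2 * int n * bnd (Suc k - dl) < g * (a i (Suc k) - a i k)))"
      proof (intro allI impI)
        fix i assume i: "i < n"
        have "Good (A ! i) (d * dl - d)" using GA[OF i] by blast
        then have G: "op_eq0 R (A ! i) \<or> (\<forall>y\<in>R. int K * int ((succR R ^^ c) y) <
          sg R (A ! i) * (op_app R (A ! i) ((succR R ^^ d) ((succR R ^^ (d * dl - d)) y)) - op_app R (A ! i) ((succR R ^^ (d * dl - d)) y)))"
          by (auto simp: Good_def)
        show "(\<forall>k. a i k = 0) \<or> (\<exists>g. (g = 1 \<or> g = - 1) \<and> (\<forall>k\<ge>dl. 2 * int n * bnd (Suc k - dl) < g * (a i (Suc k) - a i k)))"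
          using gr_from[OF eR esh dl1', of 1, OF _ G Kint] by (simp add: a_def bnd_def)
      qed
    qed
    have Hdb: "Hdom n dl (\<lambda>i k. - b i k)"
    proof (rule Hdom_gen[OF dl1' bm b0])
      show "\<forall>j<n. \<forall>k. \<bar>- b j k\<bar> \<le> bnd k" using boundC cA WA by (simp add: b_def)
      show "\<forall>i<n. (\<forall>k. - b i k = 0) \<or> (\<exists>g. (g = 1 \<or> g = - 1) \<and> (\<forall>k\<ge>dl. 2 * int n * bnd (Suc k - dl) < g * (- b i (Suc k) - - b i k)))"
      proof (intro allI impI)
        fix i assume i: "i < n"
        have "Good (B ! i) (d * dl - d)" using GA[OF i] by blast
        then have G: "op_eq0 R (B ! i) \<or> (\<forall>y\<in>R. int K * int ((succR R ^^ c) y) <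
          sg R (B ! i) * (op_app R (B ! i) ((succR R ^^ d) ((succR R ^^ (d * dl - d)) y)) - op_app R (B ! i) ((succR R ^^ (d * dl - d)) y)))"
          by (auto simp: Good_def)
        show "(\<forall>k. - b i k = 0) \<or> (\<exists>g. (g = 1 \<or> g = - 1) \<and> (\<forall>k\<ge>dl. 2 * int n * bnd (Suc k - dl) < g * (- b i (Suc k) - - b i k)))"
          using gr_from[OF eR esh dl1', of "-1", OF _ G Kint] by (simp add: b_def bnd_def)
      qed
    qed
    show "\<forall>x y1 y2 u v. length u = n \<and> length v = n \<and>
       (\<forall>i<n. \<forall>a. u ! i = Some a \<longrightarrow> a \<in> Rt) \<and>
       (\<forall>i<n. \<forall>a. v ! i = Some a \<longrightarrow> a \<in> Rt) \<and>
       (\<exists>z\<in>tuples R Rt n D. dagger R A B x y1 y2 u v z)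
       \<longrightarrow>
       (v ! 0 = None \<and>
          ((op_eq0 R (A ! 0) \<and> op_pos R (B ! 0)) \<or> (op_neg R (A ! 0) \<and> op_eq0 R (B ! 0))))
       \<or>
       (\<exists>z\<in>tuples R Rt n D. dagger R A B x y1 y2 u v z \<and>
          ((\<exists>i<n. z ! i = (succR R ^^ D) (znext Rt z i)) \<or>
           (\<exists>i<n. u ! i = Some (z ! i) \<or> v ! i = Some (z ! i)) \<or>
           ((\<forall>i<n. \<not> op_eq0 R (A ! i) \<and> \<not> op_eq0 R (B ! i)) \<and>
            (z = P_Delta R Rt n D (x - y1) A \<or> z = P_Delta R Rt n D (y2 - x) (neg_ops B)))))"
    proof (intro allI impI)
      fix x y1 y2 :: int and u v :: "nat option list"
      assume H: "length u = n \<and> length v = n \<and>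
       (\<forall>i<n. \<forall>a. u ! i = Some a \<longrightarrow> a \<in> Rt) \<and>
       (\<forall>i<n. \<forall>a. v ! i = Some a \<longrightarrow> a \<in> Rt) \<and>
       (\<exists>z\<in>tuples R Rt n D. dagger R A B x y1 y2 u v z)"
      then have Lu: "length u = n" and Lv: "length v = n"
        and uR: "\<forall>i<n. \<forall>a. u ! i = Some a \<longrightarrow> a \<in> Rt" and vR: "\<forall>i<n. \<forall>a. v ! i = Some a \<longrightarrow> a \<in> Rt"
        by auto
      obtain z0 where z0: "z0 \<in> tuples R Rt n D" "dagger R A B x y1 y2 u v z0" using H by blast
      define lo where "lo = map (map_option (inv e)) u"
      define hi where "hi = map (map_option (inv e)) v"
      define ks0 where "ks0 = map (inv e) z0"
      have zk: "z0 = map e ks0" unfolding ks0_def using tuples_surj[OF Rt z0(1)] .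
      have I0: "ks0 \<in> IT n dl" using tuples_transfer[OF Rt sm sh] z0(1) zk by metis
      have L0: "length ks0 = n" using I0 by (simp add: IT_def)
      have DT: "\<And>ks. length ks = n \<Longrightarrow> dagger R A B x y1 y2 u v (map e ks) \<longleftrightarrow>
          (FF a ks < x - y1 \<and> x - y2 < FF b ks \<and> boxok lo hi ks)"
        using dagger_transfer[OF sm Rt _ Lu Lv uR vR] unfolding lo_def hi_def a_def b_def by blast
      have S0: "ks0 \<in> SS n dl lo hi a b (x - y1) (x - y2)"
        using DT[OF L0] z0(2) zk I0 by (simp add: SS_def)
      note AM = abstract_main[OF assms(5) typs Hda Hdb S0]
      show "(v ! 0 = None \<and>
          ((op_eq0 R (A ! 0) \<and> op_pos R (B ! 0)) \<or> (op_neg R (A ! 0) \<and> op_eq0 R (B ! 0))))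
       \<or>
       (\<exists>z\<in>tuples R Rt n D. dagger R A B x y1 y2 u v z \<and>
          ((\<exists>i<n. z ! i = (succR R ^^ D) (znext Rt z i)) \<or>
           (\<exists>i<n. u ! i = Some (z ! i) \<or> v ! i = Some (z ! i)) \<or>
           ((\<forall>i<n. \<not> op_eq0 R (A ! i) \<and> \<not> op_eq0 R (B ! i)) \<and>
            (z = P_Delta R Rt n D (x - y1) A \<or> z = P_Delta R Rt n D (y2 - x) (neg_ops B)))))"
      proof (cases "hi ! 0 = None \<and> ((ta 0 = 0 \<and> tb 0 = 1) \<or> (ta 0 = -1 \<and> tb 0 = 0))")
        case True
        have v0: "v ! 0 = None" using True assms(5) Lv by (simp add: hi_def)
        have "(op_eq0 R (A ! 0) \<and> op_pos R (B ! 0)) \<or> (op_neg R (A ! 0) \<and> op_eq0 R (B ! 0))"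
        proof (cases "ta 0 = 0 \<and> tb 0 = 1")
          case True
          then show ?thesis by (auto simp: ta_def tb_def sg_def split: if_splits)
        next
          case False
          then have "ta 0 = -1" "tb 0 = 0" using \<open>hi ! 0 = None \<and> ((ta 0 = 0 \<and> tb 0 = 1) \<or> (ta 0 = -1 \<and> tb 0 = 0))\<close> by auto
          then have "\<not> op_eq0 R (A ! 0)" "\<not> op_pos R (A ! 0)" "op_eq0 R (B ! 0)"
            by (auto simp: ta_def tb_def sg_def split: if_splits)
          then show ?thesis using sparse_S1[OF sp, of "A ! 0"] by blast
        qed
        then show ?thesis using v0 by blast
      next
        case False
        then obtain ks where ks: "ks \<in> SS n dl lo hi a b (x - y1) (x - y2)"
          and alt: "goodpt n dl lo hi ks \<or> ((\<forall>i<n. ta i \<noteq> 0 \<and> tb i \<noteq> 0) \<and>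
             (Pmax n dl a (x - y1) ks \<or> Pmax n dl (\<lambda>i k. - b i k) (- (x - y2)) ks))"
          using AM by blast
        have I: "ks \<in> IT n dl" using ks by (simp add: SS_def)
        have L: "length ks = n" using I by (simp add: IT_def)
        have zT: "map e ks \<in> tuples R Rt n D" using tuples_transfer[OF Rt sm sh] I by blast
        have zD: "dagger R A B x y1 y2 u v (map e ks)" using DT[OF L] ks by (simp add: SS_def)
        have "(\<exists>i<n. map e ks ! i = (succR R ^^ D) (znext Rt (map e ks) i)) \<or>
           (\<exists>i<n. u ! i = Some (map e ks ! i) \<or> v ! i = Some (map e ks ! i)) \<or>
           ((\<forall>i<n. \<not> op_eq0 R (A ! i) \<and> \<not> op_eq0 R (B ! i)) \<and>
            (map e ks = P_Delta R Rt n D (x - y1) A \<or> map e ks = P_Delta R Rt n D (y2 - x) (neg_ops B)))"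
          using alt
        proof
          assume g: "goodpt n dl lo hi ks"
          show ?thesis
          proof (cases "\<exists>i<n. ks ! i = kn ks i + dl")
            case True
            then show ?thesis using good_transfer[OF Rt sm sh] L by auto
          next
            case False
            then obtain i where i: "i < n" "lo ! i = Some (ks ! i) \<or> hi ! i = Some (ks ! i)"
              using g unfolding goodpt_def by blast
            have "u ! i = Some (e (ks ! i)) \<or> v ! i = Some (e (ks ! i))"
              using i low_transfer(3)[OF sm] uR vR Rt Lu Lv unfolding lo_def hi_def by auto
            then show ?thesis using i L by auto
          qed
        next
          assume h: "(\<forall>i<n. ta i \<noteq> 0 \<and> tb i \<noteq> 0) \<and>
             (Pmax n dl a (x - y1) ks \<or> Pmax n dl (\<lambda>i k. - b i k) (- (x - y2)) ks)"
          have nz: "\<forall>i<n. \<not> op_eq0 R (A ! i) \<and> \<not> op_eq0 R (B ! i)"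
            using h by (auto simp: ta_def tb_def)
          have fa: "FF a ks < x - y1" and fb: "x - y2 < FF b ks" using ks by (auto simp: SS_def)
          have "map e ks = P_Delta R Rt n D (x - y1) A \<or> map e ks = P_Delta R Rt n D (y2 - x) (neg_ops B)"
            using h
          proof (elim conjE disjE)
            assume pm: "Pmax n dl a (x - y1) ks"
            have "P_Delta R Rt n D (x - y1) A = map e ks"
              by (rule Pdelta_eq[OF Rt sm sh I fa pm]) (simp add: dot_transfer a_def[abs_def])
            then show ?thesis by simp
          next
            assume pm: "Pmax n dl (\<lambda>i k. - b i k) (- (x - y2)) ks"
            have pm': "Pmax n dl (\<lambda>i k. - b i k) (y2 - x) ks" using pm by simp
            have fb': "FF (\<lambda>i k. - b i k) ks < y2 - x" using fb FF_neg[of b ks] by simp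
            have "P_Delta R Rt n D (y2 - x) (neg_ops B) = map e ks"
              by (rule Pdelta_eq[OF Rt sm sh I fb' pm']) (use assms(7) in \<open>simp add: dot_neg_transfer b_def[abs_def]\<close>)
            then show ?thesis by simp
          qed
          then show ?thesis using nz by blast
        qed
        then show ?thesis using zT zD by blast
      qed
    qed
  qed
qed


end
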